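(* (i) For all $y\in\mathbb{Z}_p$, $S^y\circ\sigma=\sigma\circ S^y+y\,S^{y-1}$ as maps on $C(\mathbb{Z}_p,\mathbb{C}_p)$. (ii) For $\phi\in C(\mathbb{Z}_p,\mathbb{C}_p)$ and $x,y\in\mathbb{Z}_p$, $$T^x(\sigma(\phi))(y)=T^{x+1}(\phi)(y)+y\,T^x(\phi)(y-1),$$ equivalently $\big((\mathbf 1-\mathbf x)^{\star y}\star\sigma(\phi)\big)(x)=\big((\mathbf 1-\mathbf x)^{\star y}\star\phi\big)(x+1)+y\big((\mathbf 1-\mathbf x)^{\star(y-1)}\star\phi\big)(x)$. (iii) If $\psi\in\mathcal{A}$, $\phi\in C(\mathbb{Z}_p,\mathbb{C}_p)$ and $x\in\mathbb{Z}_p$, then $$\big(\psi\star\sigma(\phi)\big)(x)=(\psi\star\phi)(x+1)-\big(D(\psi)\star\phi\big)(x).$$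
   Context: Fix a prime $p$. $\mathbb{C}_p$ denotes the completion of an algebraic closure of $\mathbb{Q}_p$, with absolute value $|\cdot|$ normalized by $|p|=1/p$. $C(\mathbb{Z}_p,\mathbb{C}_p)$ is the $\mathbb{C}_p$-Banach space of continuous functions $\mathbb{Z}_p\to\mathbb{C}_p$ with the sup-norm $\|\cdot\|$. For $n\in\mathbb{Z}_{\ge0}$ and $x\in\mathbb{Z}_p$, $\binom{x}{n}=x(x-1)\cdots(x-n+1)/n!$. For $\phi$ let $(\nabla\phi)(x)=\phi(x+1)-\phi(x)$ and $\sigma(\phi)(x)=\phi(x+1)$; every $\phi$ has Mahler expansion $\phi(x)=\sum_{n\ge0}(\nabla^n\phi)(0)\binom xn$. The convolution $\phi\star\psi$ is the continuous function with Mahler coefficients $(\nabla^n(\phi\star\psi))(0)=\sum_{k=0}^n\binom nk(\nabla^k\phi)(0)(\nabla^{n-k}\psi)(0)$. For $y\in\mathbb{Z}_p$, $S^y(\phi)(x)=\sum_{k\ge0}(-1)^k k!\binom yk\binom xk\phi(x-k)$; for $x\in\mathbb{Z}_p$, $T^x(\phi)(y)=S^y(\phi)(x)$. $\mathbf 1$ is the constant function $1$, $\mathbf x$ is $x\mapsto x$, $(\mathbf 1-\mathbf x)^{\star y}:=S^y(\mathbf 1)$ for $y\in\mathbb{Z}_p$, and $(\mathbf x-\mathbf 1)^{\star n}:=(-1)^nS^n(\mathbf 1)$ for $n\in\mathbb{Z}$. $\mathcal{A}$ is the set of functions $\sum_{n=-\infty}^N a_n(\mathbf x-\mathbf 1)^{\star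 n}$ with $N\in\mathbb{Z}$, $a_n\in\mathbb{C}_p$, $a_n\to0$ as $n\to-\infty$; the coefficients $a_n$ are uniquely determined by the function, and $D:\mathcal{A}\to\mathcal{A}$ is the linear operator $D\big(\sum_{n\le N}a_n(\mathbf x-\mathbf 1)^{\star n}\big)=\sum_{n\le N}na_n(\mathbf x-\mathbf 1)^{\star(n-1)}$. *)

theory Defs
  imports "HOL-Analysis.Analysis" "HOL-Computational_Algebra.Polynomial"
begin

text \<open>The type 'k with its metric plays the role of C_p; the absolute value is
  |x| = dist x 0. The predicate Cp_field characterises C_p up to isometric
  isomorphism: a complete, non-archimedean, algebraically closed valued field of
  characteristic 0 with |p| = 1/p, in which the elements algebraic over
  Q_p (= closure of Q) are dense.\<close>

definition Qp :: "'k::{field_char_0,metric_space} set" where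
  "Qp = closure (range of_rat)"

definition Zp :: "'k::{field_char_0,metric_space} set" where
  "Zp = closure (range of_int)"

definition algebraic_over :: "'k::field set \<Rightarrow> 'k \<Rightarrow> bool" where
  "algebraic_over S x \<longleftrightarrow> (\<exists>q::'k poly. q \<noteq> 0 \<and> (\<forall>i. coeff q i \<in> S) \<and> poly q x = 0)"

definition Cp_field :: "nat \<Rightarrow> 'k::{field_char_0,complete_space} itself \<Rightarrow> bool" where
  "Cp_field p (_ :: 'k itself) \<longleftrightarrow>
     prime p \<and>
     (\<forall>x y::'k. dist x y = dist (x - y) 0) \<and>
     (\<forall>x y::'k. dist (x * y) 0 = dist x 0 * dist y 0) \<and>
     (\<forall>x y::'k. dist (x + y) 0 \<le> max (dist x 0) (dist y 0)) \<and>
     dist (of_nat p :: 'k) 0 = 1 / real p \<and>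
     (\<forall>q::'k poly. degree q > 0 \<longrightarrow> (\<exists>x. poly q x = 0)) \<and>
     closure {x::'k. algebraic_over Qp x} = UNIV"

text \<open>Functions are modelled as total maps 'k => 'k; only values on Zp matter.
  Binomial coefficients (x choose n) are x gchoose n.\<close>

definition nabla :: "('k::field_char_0 \<Rightarrow> 'k) \<Rightarrow> 'k \<Rightarrow> 'k" where
  "nabla \<phi> = (\<lambda>x. \<phi> (x + 1) - \<phi> x)"

definition sigma :: "('k::field_char_0 \<Rightarrow> 'k) \<Rightarrow> 'k \<Rightarrow> 'k" where
  "sigma \<phi> = (\<lambda>x. \<phi> (x + 1))"

definition conv :: "('k::{field_char_0,metric_space} \<Rightarrow> 'k) \<Rightarrow> ('k \<Rightarrow> 'k) \<Rightarrow> 'k \<Rightarrow> 'k" where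
  "conv \<phi> \<psi> = (\<lambda>x. \<Sum>n. (\<Sum>k\<le>n. of_nat (n choose k) * (nabla ^^ k) \<phi> 0 * (nabla ^^ (n - k)) \<psi> 0)
                         * (x gchoose n))"

definition Sop :: "'k::{field_char_0,metric_space} \<Rightarrow> ('k \<Rightarrow> 'k) \<Rightarrow> 'k \<Rightarrow> 'k" where
  "Sop y \<phi> = (\<lambda>x. \<Sum>k. (- 1) ^ k * fact k * (y gchoose k) * (x gchoose k) * \<phi> (x - of_nat k))"

definition Top :: "'k::{field_char_0,metric_space} \<Rightarrow> ('k \<Rightarrow> 'k) \<Rightarrow> 'k \<Rightarrow> 'k" where
  "Top x \<phi> = (\<lambda>y. Sop y \<phi> x)"

definition one_minus_x_pow :: "'k::{field_char_0,metric_space} \<Rightarrow> 'k \<Rightarrow> 'k" where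
  "one_minus_x_pow y = Sop y (\<lambda>_. 1)"

definition x_minus_one_pow :: "int \<Rightarrow> 'k::{field_char_0,metric_space} \<Rightarrow> 'k" where
  "x_minus_one_pow n = (\<lambda>x. (- 1) powi n * Sop (of_int n) (\<lambda>_. 1) x)"

text \<open>Representation of a function of the class A: psi = sum_{n<=N} a_n (x-1)^{*n}
  on Zp, with a_n -> 0 as n -> -infinity.\<close>
definition A_rep :: "int \<Rightarrow> (int \<Rightarrow> 'k) \<Rightarrow> ('k::{field_char_0,metric_space} \<Rightarrow> 'k) \<Rightarrow> bool" where
  "A_rep N a \<psi> \<longleftrightarrow> (a \<longlongrightarrow> 0) at_bot \<and>
     (\<forall>x\<in>Zp. \<psi> x = (\<Sum>k. a (N - int k) * x_minus_one_pow (N - int k) x))"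

definition A_set :: "('k::{field_char_0,metric_space} \<Rightarrow> 'k) set" where
  "A_set = {\<psi>. \<exists>N a. A_rep N a \<psi>}"

text \<open>D(sum a_n (x-1)^{*n}) = sum n a_n (x-1)^{*(n-1)}, well defined by uniqueness of
  the coefficients (values outside Zp are set to 0).\<close>
definition Dop :: "('k::{field_char_0,metric_space} \<Rightarrow> 'k) \<Rightarrow> 'k \<Rightarrow> 'k" where
  "Dop \<psi> = (THE g. \<exists>N a. A_rep N a \<psi> \<and>
     g = (\<lambda>x. if x \<in> Zp then (\<Sum>k. of_int (N - int k) * a (N - int k) *
                                   x_minus_one_pow (N - int k - 1) x) else 0))"

end

theory Submission
  imports Defs
begin


definition nrm :: "'a::{zero,metric_space} \<Rightarrow> real" where
  "nrm x = dist x 0"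

locale cpf =
  fixes p :: nat and TT :: "'k::{field_char_0,complete_space} itself"
  assumes cp: "Cp_field p TT"
begin

lemma prime_p: "prime p" using cp by (simp add: Cp_field_def)
lemma p_gt1: "p > 1" using prime_p prime_gt_1_nat by blast

lemma dist_nrm: "dist (x::'k) y = nrm (x - y)"
  using cp by (simp add: Cp_field_def nrm_def)
lemma nrm_mult: "nrm ((x::'k) * y) = nrm x * nrm y"
  using cp by (simp add: Cp_field_def nrm_def)
lemma nrm_ultra: "nrm ((x::'k) + y) \<le> max (nrm x) (nrm y)"
  using cp by (simp add: Cp_field_def nrm_def)
lemma nrm_p: "nrm (of_nat p :: 'k) = 1 / real p"
  using cp by (simp add: Cp_field_def nrm_def)

lemma nrm_ge0[simp]: "nrm (x::'k) \<ge> 0" by (simp add: nrm_def)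
lemma nrm_0[simp]: "nrm (0::'k) = 0" by (simp add: nrm_def)
lemma nrm_eq0[simp]: "nrm (x::'k) = 0 \<longleftrightarrow> x = 0" by (simp add: nrm_def)
lemma nrm_1[simp]: "nrm (1::'k) = 1"
proof -
  have "nrm (1::'k) = nrm (1::'k) * nrm (1::'k)" using nrm_mult[of 1 1] by simp
  moreover have "nrm (1::'k) \<noteq> 0" by simp
  ultimately show ?thesis by (metis mult_cancel_right1)
qed
lemma nrm_m1[simp]: "nrm (-1::'k) = 1"
proof -
  have h: "nrm (-1::'k) * nrm (-1::'k) = 1" using nrm_mult[of "-1" "-1"] by simp
  have "(nrm (-1::'k) - 1) * (nrm (-1::'k) + 1) = 0" using h by (simp add: algebra_simps)
  moreover have "nrm (-1::'k) + 1 > 0" using nrm_ge0[of "-1"] by linarith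
  ultimately show ?thesis by simp
qed
lemma nrm_minus[simp]: "nrm (- (x::'k)) = nrm x"
  using nrm_mult[of "-1" x] by simp
lemma nrm_commute: "nrm ((x::'k) - y) = nrm (y - x)"
  by (metis minus_diff_eq nrm_minus)
lemma nrm_diff: "nrm ((x::'k) - y) \<le> max (nrm x) (nrm y)"
  using nrm_ultra[of x "-y"] by simp
lemma nrm_power: "nrm ((x::'k) ^ n) = nrm x ^ n"
  by (induction n) (auto simp: nrm_mult)
lemma nrm_m1_power[simp]: "nrm ((-1::'k) ^ n) = 1"
  by (simp add: nrm_power)
lemma nrm_of_nat_le: "nrm (of_nat n :: 'k) \<le> 1"
proof (induction n)
  case (Suc n)
  have "(of_nat (Suc n)::'k) = of_nat n + 1" by simp
  then show ?case using nrm_ultra[of "of_nat n" 1] Suc by (simp add: max_def add.commute)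
qed simp
lemma nrm_of_int_le: "nrm (of_int n :: 'k) \<le> 1"
proof (cases "n \<ge> 0")
  case True then show ?thesis using nrm_of_nat_le[of "nat n"] by simp
next
  case False then have "(of_int n::'k) = - of_nat (nat (-n))" by simp
  then show ?thesis using nrm_of_nat_le[of "nat (-n)"] by simp
qed
lemma nrm_sum_le:
  assumes "\<And>i. i \<in> S \<Longrightarrow> nrm (f i :: 'k) \<le> B" "0 \<le> B"
  shows "nrm (sum f S) \<le> B"
  using assms
proof (induction S rule: infinite_finite_induct)
  case (insert x F)
  have a: "nrm (f x) \<le> B" using insert by auto
  have b: "nrm (sum f F) \<le> B" using insert by auto
  have "nrm (f x + sum f F) \<le> B" using a b nrm_ultra[of "f x" "sum f F"]
    by (metis (no_types) max.bounded_iff order_trans)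
  then show ?case using insert by simp
qed auto
lemma nrm_mult_le1: "nrm (a::'k) \<le> 1 \<Longrightarrow> nrm (a * b) \<le> nrm b"
  by (simp add: nrm_mult mult_left_le_one_le)
lemma nrm_dvd_p: "p dvd n \<Longrightarrow> nrm (of_nat n :: 'k) \<le> 1 / real p"
proof -
  assume "p dvd n" then obtain m where "n = p * m" by auto
  then have "nrm (of_nat n :: 'k) = nrm (of_nat p :: 'k) * nrm (of_nat m :: 'k)"
    by (simp add: nrm_mult)
  also have "\<dots> \<le> 1 / real p" using nrm_of_nat_le[of m] nrm_p
    by (simp add: divide_right_mono)
  finally show ?thesis .
qed
lemma nrm_dvd_ppow: "p ^ q dvd n \<Longrightarrow> nrm (of_nat n :: 'k) \<le> (1 / real p) ^ q"
proof -
  assume "p ^ q dvd n" then obtain m where "n = p ^ q * m" by auto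
  then have "nrm (of_nat n :: 'k) = nrm (of_nat p :: 'k) ^ q * nrm (of_nat m :: 'k)"
    by (simp add: nrm_mult nrm_power)
  also have "\<dots> \<le> (1 / real p) ^ q" using nrm_of_nat_le[of m] nrm_p
    by (simp add: mult_left_le)
  finally show ?thesis .
qed

lemma ppow_dvd_fact: "p ^ q dvd fact (p * q)"
proof (induction q)
  case (Suc q)
  have "p * Suc q = Suc (p * q + (p - 1))" using p_gt1 by simp
  then have "fact (p * Suc q) = (fact (p * q + (p - 1)) :: nat) * (p * Suc q)"
    by (metis fact_Suc mult.commute of_nat_id)
  moreover have "fact (p * q) dvd (fact (p * q + (p - 1)) :: nat)" by (simp add: fact_dvd)
  ultimately show ?case using Suc
    by (metis dvd_trans mult.commute mult_dvd_mono dvd_triv_left power_Suc)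
qed simp

lemma nrm_fact_le: "nrm (fact k :: 'k) \<le> (1 / real p) ^ (k div p)"
proof -
  have "fact (p * (k div p)) dvd (fact k :: nat)"
    by (simp add: fact_dvd)
  then have "p ^ (k div p) dvd (fact k :: nat)" using ppow_dvd_fact dvd_trans by blast
  then show ?thesis using nrm_dvd_ppow by (metis of_nat_fact)
qed

lemma nrm_fact_tendsto: "(\<lambda>k. nrm (fact k :: 'k)) \<longlonglongrightarrow> 0"
proof (rule metric_LIMSEQ_I)
  fix r :: real assume r: "r > 0"
  have "(\<lambda>q. (1 / real p) ^ q) \<longlonglongrightarrow> 0" using p_gt1
    by (intro LIMSEQ_power_zero) auto
  then obtain q where q: "(1 / real p) ^ q < r" using r
    by (metis (no_types, lifting) dual_order.refl lim_sequentially dist_real_def diff_zero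
        abs_of_nonneg zero_le_divide_1_iff zero_le_power of_nat_0_le_iff)
  show "\<exists>no. \<forall>n\<ge>no. dist (nrm (fact n :: 'k)) 0 < r"
  proof (intro exI allI impI)
    fix n assume "n \<ge> p * q"
    then have "n div p \<ge> q" using p_gt1
      by (metis div_le_mono nonzero_mult_div_cancel_left not_one_less_zero)
    then have "(1 / real p) ^ (n div p) \<le> (1 / real p) ^ q" using p_gt1
      by (intro power_decreasing) auto
    then show "dist (nrm (fact n :: 'k)) 0 < r" using nrm_fact_le[of n] q by simp
  qed
qed

end


context cpf
begin

lemma tendsto_k_iff: "(f \<longlongrightarrow> (l::'k)) F \<longleftrightarrow> (\<forall>e>0. eventually (\<lambda>x. nrm (f x - l) < e) F)"
  by (simp add: tendsto_iff dist_nrm)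

lemma tendsto0_nrm: "(f \<longlongrightarrow> (0::'k)) F \<longleftrightarrow> ((\<lambda>x. nrm (f x)) \<longlongrightarrow> 0) F"
  by (simp add: tendsto_iff dist_nrm dist_real_def)

lemma tendsto0_bound:
  assumes "\<And>x. nrm (f x :: 'k) \<le> g x" "(g \<longlongrightarrow> 0) F"
  shows "((\<lambda>x. nrm (f x)) \<longlongrightarrow> 0) F"
  by (rule tendsto_sandwich[of "\<lambda>_. 0" _ _ g]) (use assms in auto)

lemma tendsto_add_k:
  assumes "(f \<longlongrightarrow> (a::'k)) F" "(g \<longlongrightarrow> b) F"
  shows "((\<lambda>x. f x + g x) \<longlongrightarrow> a + b) F"
  unfolding tendsto_k_iff
proof (intro allI impI)
  fix e :: real assume e: "e > 0"
  have "eventually (\<lambda>x. nrm (f x - a) < e) F" "eventually (\<lambda>x. nrm (g x - b) < e) F"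
    using assms e unfolding tendsto_k_iff by blast+
  then show "eventually (\<lambda>x. nrm (f x + g x - (a + b)) < e) F"
  proof eventually_elim
    case (elim x)
    have "f x + g x - (a + b) = (f x - a) + (g x - b)" by simp
    then show ?case using nrm_ultra[of "f x - a" "g x - b"] elim
      by (metis max_less_iff_conj order_le_less_trans)
  qed
qed

lemma tendsto_minus_k:
  assumes "(f \<longlongrightarrow> (a::'k)) F"
  shows "((\<lambda>x. - f x) \<longlongrightarrow> - a) F"
proof -
  have "nrm (- f x - - a) = nrm (f x - a)" for x
    by (metis minus_diff_eq minus_diff_minus nrm_minus)
  then show ?thesis using assms unfolding tendsto_k_iff by simp
qed

lemma tendsto_diff_k:
  assumes "(f \<longlongrightarrow> (a::'k)) F" "(g \<longlongrightarrow> b) F"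
  shows "((\<lambda>x. f x - g x) \<longlongrightarrow> a - b) F"
  using tendsto_add_k[OF assms(1) tendsto_minus_k[OF assms(2)]] by simp

lemma tendsto_mult_k:
  assumes "(f \<longlongrightarrow> (a::'k)) F" "(g \<longlongrightarrow> b) F"
  shows "((\<lambda>x. f x * g x) \<longlongrightarrow> a * b) F"
  unfolding tendsto_k_iff
proof (intro allI impI)
  fix e :: real assume e: "e > 0"
  define K where "K = max (nrm a) 1 + nrm b + 1"
  have m1: "max (nrm a) 1 \<ge> 1" by simp
  have nb: "nrm b \<ge> 0" by simp
  have K: "K > 0" "nrm b \<le> K" "max (nrm a) 1 \<le> K" unfolding K_def using m1 nb by linarith+
  have "min 1 (e / K) > 0" "e / K > 0" using e K by auto
  then have "eventually (\<lambda>x. nrm (f x - a) < min 1 (e / K)) F" "eventually (\<lambda>x. nrm (g x - b) < e / K) F"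
    using assms unfolding tendsto_k_iff by blast+
  then show "eventually (\<lambda>x. nrm (f x * g x - a * b) < e) F"
  proof eventually_elim
    case (elim x)
    have "nrm (f x) \<le> max (nrm a) 1"
      using nrm_ultra[of a "f x - a"] elim by (simp add: max_def split: if_splits)
    then have nf: "nrm (f x) \<le> K" using K by linarith
    have eq: "f x * g x - a * b = f x * (g x - b) + (f x - a) * b" by (simp add: algebra_simps)
    have 1: "nrm (f x * (g x - b)) < e"
    proof -
      have "nrm (f x * (g x - b)) = nrm (f x) * nrm (g x - b)" by (simp add: nrm_mult)
      also have "\<dots> \<le> K * nrm (g x - b)" using nf by (simp add: mult_right_mono)
      also have "\<dots> < K * (e / K)" using elim K by (intro mult_strict_left_mono) auto
      finally show ?thesis using K by simp
    qed
    have 2: "nrm ((f x - a) * b) < e"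
    proof -
      have "nrm ((f x - a) * b) = nrm (f x - a) * nrm b" by (simp add: nrm_mult)
      also have "\<dots> \<le> nrm (f x - a) * K" using K by (simp add: mult_left_mono)
      also have "\<dots> < (e / K) * K" using elim K by (intro mult_strict_right_mono) auto
      finally show ?thesis using K by simp
    qed
    show ?case using eq 1 2 nrm_ultra[of "f x * (g x - b)" "(f x - a) * b"] by simp
  qed
qed

lemma tendsto_sum_k:
  assumes "\<And>i. i \<in> S \<Longrightarrow> (f i \<longlongrightarrow> (a i::'k)) F"
  shows "((\<lambda>x. \<Sum>i\<in>S. f i x) \<longlongrightarrow> (\<Sum>i\<in>S. a i)) F"
  using assms
proof (induction S rule: infinite_finite_induct)
  case (insert x S)
  then show ?case by (simp add: tendsto_add_k)
qed auto

lemma tendsto_prod_k: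
  assumes "\<And>i. i \<in> S \<Longrightarrow> (f i \<longlongrightarrow> (a i::'k)) F"
  shows "((\<lambda>x. \<Prod>i\<in>S. f i x) \<longlongrightarrow> (\<Prod>i\<in>S. a i)) F"
  using assms
proof (induction S rule: infinite_finite_induct)
  case (insert x S)
  then show ?case by (simp add: tendsto_mult_k)
qed auto

lemma tendsto_gchoose_k:
  assumes "(f \<longlongrightarrow> (a::'k)) F"
  shows "((\<lambda>x. f x gchoose k) \<longlongrightarrow> a gchoose k) F"
proof -
  have "((\<lambda>x. (\<Prod>i = 0..<k. f x - of_nat i) * (1 / fact k)) \<longlongrightarrow>
          (\<Prod>i = 0..<k. a - of_nat i) * (1 / fact k)) F"
    by (intro tendsto_mult_k tendsto_prod_k tendsto_diff_k assms tendsto_const)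
  moreover have "\<And>z::'k. z gchoose k = (\<Prod>i = 0..<k. z - of_nat i) * (1 / fact k)"
    by (metis gbinomial_mult_fact' fact_nonzero nonzero_eq_divide_eq times_divide_eq_right mult_1_right)
  ultimately show ?thesis by simp
qed

lemma summable_k:
  assumes "((\<lambda>k. nrm (f k :: 'k)) \<longlongrightarrow> 0) sequentially"
  shows "summable f"
proof -
  have "Cauchy (\<lambda>n. \<Sum>i<n. f i)"
  proof (rule metric_CauchyI)
    fix e :: real assume e: "e > 0"
    have "e / 2 > 0" using e by simp
    then have "\<exists>M. \<forall>k\<ge>M. \<bar>nrm (f k) - 0\<bar> < e / 2"
      using assms unfolding lim_sequentially dist_real_def by blast
    then obtain M where "\<forall>k\<ge>M. \<bar>nrm (f k) - 0\<bar> < e / 2" by blast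
    then have M: "\<And>k. k \<ge> M \<Longrightarrow> nrm (f k) < e / 2" by simp
    have *: "dist (\<Sum>i<m. f i) (\<Sum>i<n. f i) < e" if "m \<ge> M" "n \<ge> M" "n \<le> m" for m n
    proof -
      have "(\<Sum>i<m. f i) - (\<Sum>i<n. f i) = (\<Sum>i\<in>{n..<m}. f i)"
        using that by (metis sum_diff_nat_ivl atLeast0LessThan zero_le)
      moreover have "nrm (\<Sum>i\<in>{n..<m}. f i) \<le> e / 2"
      proof (rule nrm_sum_le)
        fix i assume "i \<in> {n..<m}"
        then have "i \<ge> M" using that by simp
        then show "nrm (f i) \<le> e / 2" using M[of i] by simp
      qed (use e in simp)
      ultimately show ?thesis using e by (simp add: dist_nrm)
    qed
    show "\<exists>M. \<forall>m\<ge>M. \<forall>n\<ge>M. dist (\<Sum>i<m. f i) (\<Sum>i<n. f i) < e"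
    proof (intro exI allI impI)
      fix m n assume "m \<ge> M" "n \<ge> M"
      then show "dist (\<Sum>i<m. f i) (\<Sum>i<n. f i) < e"
        using *[of m n] *[of n m] by (cases "n \<le> m") (auto simp: dist_commute)
    qed
  qed
  then show ?thesis unfolding summable_def sums_def
    using Cauchy_convergent convergent_def by blast
qed

lemma summable_bound_k:
  assumes "\<And>k. nrm (f k :: 'k) \<le> g k" "g \<longlonglongrightarrow> 0"
  shows "summable f"
  using summable_k tendsto0_bound assms by blast

lemma nrm_lim_le:
  assumes "(f \<longlongrightarrow> (l::'k)) sequentially" "eventually (\<lambda>n. nrm (f n) \<le> B) sequentially"
  shows "nrm l \<le> B"
proof -
  have "((\<lambda>n. dist (f n) 0) \<longlongrightarrow> dist l 0) sequentially"
    by (intro tendsto_dist assms tendsto_const)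
  then show ?thesis using assms(2) unfolding nrm_def
    by (intro tendsto_upperbound) auto
qed

lemma nrm_tail_le:
  assumes "summable (f :: nat \<Rightarrow> 'k)" "\<And>k. k \<ge> n \<Longrightarrow> nrm (f k) \<le> B" "0 \<le> B"
  shows "nrm (suminf f - (\<Sum>k<n. f k)) \<le> B"
proof (rule nrm_lim_le)
  show "(\<lambda>m. (\<Sum>k<m. f k) - (\<Sum>k<n. f k)) \<longlonglongrightarrow> suminf f - (\<Sum>k<n. f k)"
    using summable_sums[OF assms(1)] unfolding sums_def
    by (intro tendsto_diff_k tendsto_const)
  show "\<forall>\<^sub>F m in sequentially. nrm ((\<Sum>k<m. f k) - (\<Sum>k<n. f k)) \<le> B"
    unfolding eventually_sequentially
  proof (intro exI allI impI)
    fix m assume "m \<ge> n"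
    then have "(\<Sum>k<m. f k) - (\<Sum>k<n. f k) = (\<Sum>k\<in>{n..<m}. f k)"
      by (metis sum_diff_nat_ivl atLeast0LessThan zero_le)
    then show "nrm ((\<Sum>k<m. f k) - (\<Sum>k<n. f k)) \<le> B"
      using assms by (auto intro!: nrm_sum_le)
  qed
qed

lemma nrm_suminf_le:
  assumes "summable (f :: nat \<Rightarrow> 'k)" "\<And>k. nrm (f k) \<le> B" "0 \<le> B"
  shows "nrm (suminf f) \<le> B"
  using nrm_tail_le[OF assms(1), of 0 B] assms by simp

lemma sums_add_k: "f sums (a::'k) \<Longrightarrow> g sums b \<Longrightarrow> (\<lambda>n. f n + g n) sums (a + b)"
  unfolding sums_def by (simp add: sum.distrib tendsto_add_k)
lemma sums_diff_k: "f sums (a::'k) \<Longrightarrow> g sums b \<Longrightarrow> (\<lambda>n. f n - g n) sums (a - b)"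
  unfolding sums_def by (simp add: sum_subtractf tendsto_diff_k)
lemma sums_cmult_k: "f sums (a::'k) \<Longrightarrow> (\<lambda>n. c * f n) sums (c * a)"
  unfolding sums_def by (simp add: sum_distrib_left[symmetric] tendsto_mult_k)
lemma sums_minus_k: "f sums (a::'k) \<Longrightarrow> (\<lambda>n. - f n) sums (- a)"
  unfolding sums_def by (simp add: sum_negf tendsto_minus_k)
lemma sums_Suc_k: "f sums (a::'k) \<Longrightarrow> (\<lambda>n. f (Suc n)) sums (a - f 0)"
proof -
  assume "f sums a"
  then have "(\<lambda>n. \<Sum>i<Suc n. f i) \<longlonglongrightarrow> a" unfolding sums_def by (rule LIMSEQ_Suc)
  then have "(\<lambda>n. (\<Sum>i<Suc n. f i) - f 0) \<longlonglongrightarrow> a - f 0" by (intro tendsto_diff_k tendsto_const)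
  moreover have "(\<Sum>i<Suc n. f i) - f 0 = (\<Sum>i<n. f (Suc i))" for n
  proof -
    have "(\<Sum>i<Suc n. f i) = f 0 + (\<Sum>i<n. f (Suc i))" by (rule sum.lessThan_Suc_shift)
    then show ?thesis by simp
  qed
  ultimately show ?thesis unfolding sums_def by simp
qed

lemma suminf_add_k: "summable f \<Longrightarrow> summable g \<Longrightarrow> (\<Sum>n. f n + g n :: 'k) = suminf f + suminf g"
  by (metis sums_add_k summable_sums sums_unique)
lemma suminf_diff_k: "summable f \<Longrightarrow> summable g \<Longrightarrow> (\<Sum>n. f n - g n :: 'k) = suminf f - suminf g"
  by (metis sums_diff_k summable_sums sums_unique)
lemma suminf_cmult_k: "summable f \<Longrightarrow> (\<Sum>n. c * f n :: 'k) = c * suminf f"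
  by (metis sums_cmult_k summable_sums sums_unique)

end


context cpf
begin

lemma Zp_closed: "closed (Zp :: 'k set)"
  by (simp add: Zp_def)
lemma of_int_Zp[simp]: "(of_int n :: 'k) \<in> Zp"
  unfolding Zp_def by (meson closure_subset rangeI subsetD)
lemma of_nat_Zp[simp]: "(of_nat n :: 'k) \<in> Zp"
  using of_int_Zp[of "int n"] by simp
lemma zero_Zp[simp]: "(0 :: 'k) \<in> Zp" using of_nat_Zp[of 0] by simp
lemma one_Zp[simp]: "(1 :: 'k) \<in> Zp" using of_nat_Zp[of 1] by simp

lemma Zp_approx_int:
  assumes "x \<in> (Zp :: 'k set)" "e > 0"
  shows "\<exists>z::int. nrm (x - of_int z) < e"
proof -
  obtain y where "y \<in> range (of_int :: int \<Rightarrow> 'k)" "dist y x < e"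
    using assms unfolding Zp_def closure_approachable by blast
  then show ?thesis by (auto simp: dist_nrm nrm_commute)
qed

lemma Zp_seq:
  assumes "x \<in> (Zp :: 'k set)"
  obtains s :: "nat \<Rightarrow> int" where "(\<lambda>n. of_int (s n) :: 'k) \<longlonglongrightarrow> x"
proof -
  obtain y where y: "\<And>n. y n \<in> range (of_int :: int \<Rightarrow> 'k)" "y \<longlonglongrightarrow> x"
    using assms unfolding Zp_def closure_sequential by blast
  then have "\<forall>n. \<exists>z. y n = of_int z" by blast
  then obtain s where "\<And>n. y n = of_int (s n)" by metis
  then show ?thesis using that y(2) by (metis (no_types, lifting) ext)
qed

lemma Zp_closed_op:
  assumes "\<And>(s :: nat \<Rightarrow> 'k) l. (s \<longlongrightarrow> l) sequentially \<Longrightarrow> ((\<lambda>n. f (s n)) \<longlongrightarrow> f l) sequentially"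
    and "\<And>z. f (of_int z) \<in> (Zp :: 'k set)"
    and "x \<in> Zp"
  shows "f x \<in> Zp"
proof -
  obtain s where s: "(\<lambda>n. of_int (s n) :: 'k) \<longlonglongrightarrow> x" using Zp_seq assms(3) by blast
  have "(\<lambda>n. f (of_int (s n))) \<longlonglongrightarrow> f x" using assms(1)[OF s] .
  moreover have "\<And>n. f (of_int (s n)) \<in> Zp" using assms(2) by blast
  ultimately show ?thesis
    by (rule_tac closed_sequentially[OF Zp_closed, of "\<lambda>n. f (of_int (s n))"]) auto
qed

lemma Zp_closed_op2:
  assumes "\<And>(s :: nat \<Rightarrow> 'k) l (t :: nat \<Rightarrow> 'k) m. (s \<longlongrightarrow> l) sequentially \<Longrightarrow> (t \<longlongrightarrow> m) sequentially \<Longrightarrow>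
               ((\<lambda>n. f (s n) (t n)) \<longlongrightarrow> f l m) sequentially"
    and "\<And>z w. f (of_int z) (of_int w) \<in> (Zp :: 'k set)"
    and "x \<in> Zp" "y \<in> Zp"
  shows "f x y \<in> Zp"
proof -
  have h: "f x (of_int w) \<in> Zp" for w
  proof (rule Zp_closed_op[of "\<lambda>z. f z (of_int w)"])
    fix s :: "nat \<Rightarrow> 'k" and l assume "s \<longlonglongrightarrow> l"
    then show "(\<lambda>n. f (s n) (of_int w)) \<longlonglongrightarrow> f l (of_int w)"
      using assms(1)[of s l "\<lambda>_. of_int w"] by simp
  qed (use assms in auto)
  show ?thesis
  proof (rule Zp_closed_op[of "f x"])
    fix s :: "nat \<Rightarrow> 'k" and l assume "s \<longlonglongrightarrow> l"
    then show "(\<lambda>n. f x (s n)) \<longlonglongrightarrow> f x l"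
      using assms(1)[of "\<lambda>_. x" x s l] by simp
  qed (use assms h in auto)
qed

lemma Zp_add[simp]: "x \<in> Zp \<Longrightarrow> y \<in> Zp \<Longrightarrow> x + (y::'k) \<in> Zp"
  by (rule Zp_closed_op2[of "(+)"]) (auto intro: tendsto_add_k simp del: of_int_add simp: of_int_add[symmetric])
lemma Zp_diff[simp]: "x \<in> Zp \<Longrightarrow> y \<in> Zp \<Longrightarrow> x - (y::'k) \<in> Zp"
  by (rule Zp_closed_op2[of "(-)"]) (auto intro: tendsto_diff_k simp del: of_int_diff simp: of_int_diff[symmetric])
lemma Zp_mult[simp]: "x \<in> Zp \<Longrightarrow> y \<in> Zp \<Longrightarrow> x * (y::'k) \<in> Zp"
  by (rule Zp_closed_op2[of "(*)"]) (auto intro: tendsto_mult_k simp del: of_int_mult simp: of_int_mult[symmetric])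
lemma Zp_minus[simp]: "x \<in> Zp \<Longrightarrow> - (x::'k) \<in> Zp"
  using Zp_diff[of 0 x] by simp

lemma Zp_nrm_le: "x \<in> (Zp :: 'k set) \<Longrightarrow> nrm x \<le> 1"
proof -
  have "range (of_int :: int \<Rightarrow> 'k) \<subseteq> cball 0 1"
    using nrm_of_int_le by (auto simp: nrm_def dist_commute)
  then have "Zp \<subseteq> cball (0::'k) 1" unfolding Zp_def by (intro closure_minimal) auto
  then show "x \<in> Zp \<Longrightarrow> nrm x \<le> 1" by (auto simp: nrm_def dist_commute)
qed

lemma int_gchoose_int: "\<exists>w::int. (of_int z gchoose k :: 'k) = of_int w"
proof (cases "z \<ge> 0")
  case True
  then have "(of_int z :: 'k) = of_nat (nat z)" by simp
  then show ?thesis by (metis binomial_gbinomial of_int_of_nat_eq)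
next
  case False
  then have "(of_int z :: 'k) = - of_nat (nat (-z))" by simp
  moreover have "(of_nat (nat (-z)) + of_nat k - 1 :: 'k) = of_nat (nat (-z) + k - 1)"
    using False by (simp add: of_nat_diff)
  ultimately have "(of_int z gchoose k :: 'k) = (-1) ^ k * of_nat ((nat (-z) + k - 1) choose k)"
    by (simp add: gbinomial_minus binomial_gbinomial)
  then show ?thesis by (intro exI[of _ "(-1) ^ k * int ((nat (-z) + k - 1) choose k)"]) simp
qed

lemma Zp_gchoose[simp]: "x \<in> (Zp :: 'k set) \<Longrightarrow> x gchoose k \<in> Zp"
proof (rule Zp_closed_op[of "\<lambda>x. x gchoose k"])
  show "\<And>z. (of_int z gchoose k :: 'k) \<in> Zp" using int_gchoose_int by (metis of_int_Zp)
qed (auto intro: tendsto_gchoose_k)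

lemma Zp_gchoose_nrm: "x \<in> (Zp :: 'k set) \<Longrightarrow> nrm (x gchoose k) \<le> 1"
  using Zp_gchoose Zp_nrm_le by blast

lemma ppow_small: "e > 0 \<Longrightarrow> \<exists>t. (1 / real p) ^ t < e"
proof -
  assume e: "e > 0"
  have "(\<lambda>q. (1 / real p) ^ q) \<longlonglongrightarrow> 0" using p_gt1
    by (intro LIMSEQ_power_zero) auto
  then have "\<exists>t. \<forall>q\<ge>t. \<bar>(1 / real p) ^ q - 0\<bar> < e" using e unfolding lim_sequentially dist_real_def by blast
  then show ?thesis by auto
qed

lemma nrm_ppow: "nrm (of_nat (p ^ t) :: 'k) \<le> (1 / real p) ^ t"
  by (rule nrm_dvd_ppow) simp

end


context cpf
begin

lemma Zp_approx_nat:
  assumes "x \<in> (Zp :: 'k set)" "e > 0"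
  shows "\<exists>m::nat. nrm (x - of_nat m) < e"
proof -
  obtain z where z: "nrm (x - of_int z) < e" using Zp_approx_int assms by blast
  obtain t where t: "(1 / real p) ^ t < e" using ppow_small assms by blast
  define m where "m = z + int (p ^ t) * \<bar>z\<bar>"
  have "int (p ^ t) \<ge> 1" using p_gt1 by simp
  then have "1 * \<bar>z\<bar> \<le> int (p ^ t) * \<bar>z\<bar>" by (rule mult_right_mono) simp
  then have "m \<ge> 0" unfolding m_def by arith
  have "(of_int z - of_int m :: 'k) = - (of_nat (p ^ t) * of_int \<bar>z\<bar>)"
    unfolding m_def by simp
  then have "nrm (of_int z - of_int m :: 'k) = nrm (of_nat (p ^ t) :: 'k) * nrm (of_int \<bar>z\<bar> :: 'k)"
    by (simp add: nrm_mult)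
  also have "\<dots> \<le> (1 / real p) ^ t * 1"
    by (rule mult_mono[OF nrm_ppow nrm_of_int_le]) auto
  finally have "nrm (of_int z - of_int m :: 'k) < e" using t by simp
  then have "nrm (x - of_int m) < e" using z nrm_ultra[of "x - of_int z" "of_int z - of_int m"]
    by (simp add: max_less_iff_conj)
  moreover have "(of_int m :: 'k) = of_nat (nat m)" using \<open>m \<ge> 0\<close> by simp
  ultimately show ?thesis by metis
qed

lemma Zp_compact: "compact (Zp :: 'k set)"
  unfolding compact_eq_totally_bounded
proof (intro conjI allI impI)
  show "complete (Zp :: 'k set)" using Zp_closed complete_eq_closed by blast
  fix e :: real assume e: "e > 0"
  obtain t where t: "(1 / real p) ^ t < e" using ppow_small e by blast
  define K where "K = (of_nat :: nat \<Rightarrow> 'k) ` {..<p ^ t}"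
  have sub: "Zp \<subseteq> (\<Union>x\<in>K. ball x e)"
  proof
    fix x :: 'k assume x: "x \<in> Zp"
    obtain z where z: "nrm (x - of_int z) < e" using Zp_approx_int x e by blast
    define r where "r = z mod int (p ^ t)"
    have pp: "int (p ^ t) > 0" using p_gt1 by simp
    have r: "r \<ge> 0" "r < int (p ^ t)" unfolding r_def using pp by (simp_all add: pos_mod_sign pos_mod_bound)
    have h: "z - r = int (p ^ t) * (z div int (p ^ t))" unfolding r_def
      by (rule minus_mod_eq_mult_div)
    have "(of_int z - of_int r :: 'k) = of_nat (p ^ t) * of_int (z div int (p ^ t))"
      using arg_cong[OF h, of "of_int :: int \<Rightarrow> 'k"] by simp
    then have "nrm (of_int z - of_int r :: 'k) = nrm (of_nat (p ^ t) :: 'k) * nrm (of_int (z div int (p ^ t)) :: 'k)"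
      by (simp add: nrm_mult)
    also have "\<dots> \<le> (1 / real p) ^ t * 1"
      by (rule mult_mono[OF nrm_ppow nrm_of_int_le]) auto
    finally have "nrm (of_int z - of_int r :: 'k) < e" using t by simp
    then have "nrm (x - of_int r) < e" using z nrm_ultra[of "x - of_int z" "of_int z - of_int r"]
      by (simp add: max_less_iff_conj)
    moreover have "(of_int r :: 'k) = of_nat (nat r)" using r by simp
    moreover have "nat r \<in> {..<p ^ t}" using r by (simp add: nat_less_iff)
    ultimately have "nrm (x - of_nat (nat r)) < e" "(of_nat (nat r) :: 'k) \<in> K"
      unfolding K_def by auto
    moreover have "dist (of_nat (nat r)) x = nrm (x - of_nat (nat r))"
      using nrm_commute[of "of_nat (nat r)" x] by (simp add: dist_nrm)
    ultimately show "x \<in> (\<Union>x\<in>K. ball x e)" by (metis UN_I mem_ball)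
  qed
  have fin: "finite K" unfolding K_def by simp
  show "\<exists>k. finite k \<and> (Zp :: 'k set) \<subseteq> (\<Union>x\<in>k. ball x e)"
    by (rule exI[of _ K], rule conjI[OF fin sub])
qed

lemma cont_bounded:
  assumes "continuous_on Zp (\<phi> :: 'k \<Rightarrow> 'k)"
  shows "\<exists>B\<ge>0. \<forall>x\<in>Zp. nrm (\<phi> x) \<le> B"
proof -
  have "bounded (\<phi> ` Zp)" using compact_continuous_image[OF assms Zp_compact] compact_imp_bounded by blast
  then obtain B where "\<forall>y\<in>\<phi> ` Zp. dist 0 y \<le> B" using bounded_any_center by blast
  then have "\<forall>x\<in>Zp. nrm (\<phi> x) \<le> B" by (auto simp: nrm_def dist_commute)
  moreover have "B \<ge> 0" using calculation zero_Zp nrm_ge0 order_trans by blast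
  ultimately show ?thesis by blast
qed

lemma cont_unif:
  assumes "continuous_on Zp (\<phi> :: 'k \<Rightarrow> 'k)" "e > 0"
  shows "\<exists>t. \<forall>x\<in>Zp. nrm (\<phi> (x + of_nat (p ^ Suc t)) - \<phi> x) < e"
proof -
  have "uniformly_continuous_on Zp \<phi>" using compact_uniformly_continuous[OF assms(1) Zp_compact] .
  then obtain d where d: "d > 0" "\<And>x x'. x \<in> Zp \<Longrightarrow> x' \<in> Zp \<Longrightarrow> dist x' x < d \<Longrightarrow> dist (\<phi> x') (\<phi> x) < e"
    using assms(2) unfolding uniformly_continuous_on_def by metis
  obtain t where t: "(1 / real p) ^ t < d" using ppow_small d by blast
  have "(1 / real p) ^ Suc t \<le> (1 / real p) ^ t" using p_gt1 by (intro power_decreasing) auto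
  show ?thesis
  proof (intro exI ballI)
    fix x :: 'k assume x: "x \<in> Zp"
    have "dist (x + of_nat (p ^ Suc t)) x < d"
      using nrm_ppow[of "Suc t"] t \<open>(1 / real p) ^ Suc t \<le> (1 / real p) ^ t\<close>
      by (simp add: dist_nrm del: of_nat_power power_Suc)
    then show "nrm (\<phi> (x + of_nat (p ^ Suc t)) - \<phi> x) < e"
      using d(2)[of x "x + of_nat (p ^ Suc t)"] x by (simp add: dist_nrm del: of_nat_power)
  qed
qed

end


context cpf
begin

lemma nabla_Suc: "(nabla ^^ Suc n) (f :: 'k \<Rightarrow> 'k) x = (nabla ^^ n) f (x + 1) - (nabla ^^ n) f x"
  by (simp add: nabla_def)

lemma nabla_Suc_right: "(nabla ^^ Suc n) (f :: 'k \<Rightarrow> 'k) = (nabla ^^ n) (nabla f)"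
  by (simp only: funpow_Suc_right comp_def)

lemma nabla_pow_add: "(nabla ^^ (m + n)) (f :: 'k \<Rightarrow> 'k) = (nabla ^^ m) ((nabla ^^ n) f)"
  by (simp add: funpow_add)

lemma nabla_pow_local:
  assumes "\<And>j. f (x + of_nat j) = (g (x + of_nat j) :: 'k)"
  shows "(nabla ^^ n) f x = (nabla ^^ n) g x"
  using assms
proof (induction n arbitrary: x)
  case 0 then show ?case using 0[of 0] by simp
next
  case (Suc n)
  have e: "(x + 1) + of_nat j = x + of_nat (Suc j)" for j :: nat by simp
  have "(nabla ^^ n) f (x + 1) = (nabla ^^ n) g (x + 1)"
    by (rule Suc.IH) (simp only: e Suc.prems)
  moreover have "(nabla ^^ n) f x = (nabla ^^ n) g x" using Suc.prems by (rule Suc.IH)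
  ultimately show ?case unfolding nabla_Suc by simp
qed

lemma nabla_pow_local_nat:
  assumes "\<And>j. f (of_nat j) = (g (of_nat j) :: 'k)"
  shows "(nabla ^^ n) f (of_nat m) = (nabla ^^ n) g (of_nat m)"
  by (rule nabla_pow_local) (metis assms of_nat_add)

lemma nabla_pow_bound:
  assumes "\<And>m. nrm (f (of_nat m) :: 'k) \<le> B" "0 \<le> B"
  shows "nrm ((nabla ^^ n) f (of_nat m)) \<le> B"
proof (induction n arbitrary: m)
  case 0 then show ?case using assms by simp
next
  case (Suc n)
  have "(of_nat m + 1 :: 'k) = of_nat (Suc m)" by simp
  then have a: "nrm ((nabla ^^ n) f (of_nat m + 1)) \<le> B" using Suc by metis
  have b: "nrm ((nabla ^^ n) f (of_nat m)) \<le> B" using Suc by blast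
  show ?case unfolding nabla_Suc
    using a b nrm_diff[of "(nabla ^^ n) f (of_nat m + 1)" "(nabla ^^ n) f (of_nat m)"]
    by (metis (no_types) max.bounded_iff order_trans)
qed

lemma nabla_pow_cmult: "(nabla ^^ n) (\<lambda>z. c * f z) x = c * (nabla ^^ n) (f :: 'k \<Rightarrow> 'k) x"
  by (induction n arbitrary: x) (simp_all add: nabla_Suc right_diff_distrib del: funpow.simps)

lemma nabla_pow_diff: "(nabla ^^ n) (\<lambda>z. f z - g z) x = (nabla ^^ n) f x - (nabla ^^ n) (g :: 'k \<Rightarrow> 'k) x"
  by (induction n arbitrary: x) (simp_all add: nabla_Suc algebra_simps del: funpow.simps)

lemma nabla_pow_shift: "(nabla ^^ n) (\<lambda>z. f (z + c)) x = (nabla ^^ n) (f :: 'k \<Rightarrow> 'k) (x + c)"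
  by (induction n arbitrary: x) (simp_all add: nabla_Suc algebra_simps del: funpow.simps)

lemma nabla_pow_sigma: "(nabla ^^ n) (sigma f) x = (nabla ^^ n) (f :: 'k \<Rightarrow> 'k) (x + 1)"
  unfolding sigma_def by (rule nabla_pow_shift)

lemma nabla_pow_shift_diff:
  "(nabla ^^ k) f (x + c) - (nabla ^^ k) f x = (nabla ^^ k) (\<lambda>z. f (z + c) - f z) (x :: 'k)"
  by (simp add: nabla_pow_diff nabla_pow_shift)

lemma nabla_pow_formula:
  "(nabla ^^ n) f x = (\<Sum>j\<le>n. (-1) ^ (n - j) * of_nat (n choose j) * f (x + of_nat j) :: 'k)"
proof (induction n arbitrary: x)
  case 0 then show ?case by simp
next
  case (Suc n)
  define T where "T y = (\<Sum>j\<le>n. (-1) ^ (n - j) * of_nat (n choose j) * f (y + of_nat j) :: 'k)" for y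
  define U where "U = (\<Sum>j<n. (-1) ^ (n - Suc j) * of_nat (n choose Suc j) * f (x + 1 + of_nat j) :: 'k)"
  have A1: "(\<Sum>j\<le>Suc n. (-1) ^ (Suc n - j) * of_nat (Suc n choose j) * f (x + of_nat j) :: 'k)
     = (-1) ^ Suc n * f x + (\<Sum>j\<le>n. (-1) ^ (n - j) * of_nat (Suc n choose Suc j) * f (x + 1 + of_nat j))"
    by (subst sum.atMost_Suc_shift) (simp add: add_ac)
  have A2: "(\<Sum>j\<le>n. (-1) ^ (n - j) * of_nat (Suc n choose Suc j) * f (x + 1 + of_nat j) :: 'k)
     = T (x + 1) + (\<Sum>j\<le>n. (-1) ^ (n - j) * of_nat (n choose Suc j) * f (x + 1 + of_nat j))"
    unfolding T_def by (simp add: sum.distrib[symmetric] algebra_simps)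
  have B: "T x = (-1) ^ n * f x + U"
    unfolding T_def U_def by (subst sum.atMost_shift) (simp add: add_ac)
  have C: "(\<Sum>j\<le>n. (-1) ^ (n - j) * of_nat (n choose Suc j) * f (x + 1 + of_nat j) :: 'k) = - U"
  proof -
    have "(\<Sum>j\<le>n. (-1) ^ (n - j) * of_nat (n choose Suc j) * f (x + 1 + of_nat j) :: 'k)
        = (\<Sum>j<Suc n. (-1) ^ (n - j) * of_nat (n choose Suc j) * f (x + 1 + of_nat j))"
      by (simp only: lessThan_Suc_atMost)
    also have "\<dots> = (\<Sum>j<n. (-1) ^ (n - j) * of_nat (n choose Suc j) * f (x + 1 + of_nat j))"
      by simp
    also have "\<dots> = (\<Sum>j<n. - ((-1) ^ (n - Suc j) * of_nat (n choose Suc j) * f (x + 1 + of_nat j)))"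
    proof (rule sum.cong)
      fix j assume "j \<in> {..<n}"
      then have "n - j = Suc (n - Suc j)" by auto
      then show "(-1) ^ (n - j) * of_nat (n choose Suc j) * f (x + 1 + of_nat j) =
                 - ((-1) ^ (n - Suc j) * of_nat (n choose Suc j) * f (x + 1 + of_nat j) :: 'k)" by simp
    qed simp
    also have "\<dots> = - U" unfolding U_def by (simp add: sum_negf)
    finally show ?thesis .
  qed
  have "(\<Sum>j\<le>Suc n. (-1) ^ (Suc n - j) * of_nat (Suc n choose j) * f (x + of_nat j) :: 'k) = T (x + 1) - T x"
    using A1 A2 B C by (simp add: algebra_simps)
  moreover have "(nabla ^^ Suc n) f x = T (x + 1) - T x"
    unfolding nabla_Suc T_def Suc.IH ..
  ultimately show ?case by simp
qed

lemma choose_ppow_dvd: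
  assumes "0 < j" "j < p ^ t"
  shows "p dvd (p ^ t choose j)"
proof (rule ccontr)
  assume nd: "\<not> p dvd (p ^ t choose j)"
  obtain i where i: "j = Suc i" using assms(1) by (cases j) auto
  obtain q where q: "p ^ t = Suc q" using assms by (cases "p ^ t") auto
  have "Suc q * (q choose i) = (Suc q choose Suc i) * Suc i" by (rule Suc_times_binomial_eq)
  then have "p ^ t dvd (p ^ t choose j) * j" using i q by (metis dvd_triv_left)
  moreover have "coprime p (p ^ t choose j)" using prime_imp_coprime[OF prime_p nd] .
  then have "coprime (p ^ t) (p ^ t choose j)" by simp
  ultimately have "p ^ t dvd j" using coprime_dvd_mult_right_iff by blast
  then show False using assms by (simp add: nat_dvd_not_less)
qed

lemma nabla_ppow_bound:
  assumes t: "t > 0" and B: "\<And>m. nrm (h (of_nat m) :: 'k) \<le> B" "0 \<le> B"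
  shows "nrm ((nabla ^^ (p ^ t)) h (of_nat n)) \<le>
           max (nrm (h (of_nat n + of_nat (p ^ t)) - h (of_nat n))) (B / real p)"
proof -
  define q where "q = p ^ t"
  have "p ^ t \<ge> p ^ 1" using t p_gt1 by (intro power_increasing) auto
  then have q1: "q > 1" using p_gt1 unfolding q_def by simp
  define g where "g j = ((-1) ^ (q - j) * of_nat (q choose j) * h (of_nat n + of_nat j) :: 'k)" for j
  have split: "(\<Sum>j\<le>q. g j) = g 0 + g q + (\<Sum>j\<in>{1..<q}. g j)"
  proof -
    have "{..q} = insert 0 (insert q {1..<q})" using q1 by auto
    then show ?thesis using q1 by (simp add: add_ac)
  qed
  have g0q: "g 0 + g q = (h (of_nat n + of_nat q) - h (of_nat n)) + (1 + (-1) ^ q) * h (of_nat n)"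
    by (simp add: g_def algebra_simps)
  have Bp: "B / real p \<ge> 0" using B by simp
  have mid: "nrm (\<Sum>j\<in>{1..<q}. g j) \<le> B / real p"
  proof (rule nrm_sum_le[OF _ Bp])
    fix j assume j: "j \<in> {1..<q}"
    then have "p dvd (q choose j)" unfolding q_def by (intro choose_ppow_dvd) auto
    then have c: "nrm (of_nat (q choose j) :: 'k) \<le> 1 / real p" by (rule nrm_dvd_p)
    have "nrm (g j) = nrm (of_nat (q choose j) :: 'k) * nrm (h (of_nat (n + j)))"
      by (simp add: g_def nrm_mult nrm_power)
    also have "\<dots> \<le> (1 / real p) * B"
      by (rule mult_mono[OF c B(1)]) auto
    finally show "nrm (g j) \<le> B / real p" by simp
  qed
  have cterm: "nrm ((1 + (-1) ^ q :: 'k) * h (of_nat n)) \<le> B / real p"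
  proof (cases "even q")
    case True
    then have "even p" unfolding q_def using t by (simp add: even_power)
    then have "\<not> p > 2" using prime_odd_nat[OF prime_p] by blast
    then have "p = 2" using p_gt1 by linarith
    then have "(1 + (-1) ^ q :: 'k) = of_nat p" using True by simp
    then have "nrm ((1 + (-1) ^ q :: 'k) * h (of_nat n)) = (1 / real p) * nrm (h (of_nat n))"
      by (simp add: nrm_mult nrm_p)
    also have "\<dots> \<le> (1 / real p) * B" using B by (intro mult_left_mono) auto
    finally show ?thesis by simp
  next
    case False
    then show ?thesis using Bp by simp
  qed
  define D where "D = h (of_nat n + of_nat q) - h (of_nat n)"
  define C where "C = (1 + (-1) ^ q :: 'k) * h (of_nat n)"
  define M where "M = (\<Sum>j\<in>{1..<q}. g j)"
  have sum_eq: "(nabla ^^ q) h (of_nat n) = (\<Sum>j\<le>q. g j)"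
    by (simp add: nabla_pow_formula g_def)
  have "(nabla ^^ q) h (of_nat n) = D + (C + M)"
    unfolding sum_eq split g0q D_def C_def M_def by (simp only: add.assoc)
  moreover have "nrm (C + M) \<le> B / real p"
  proof -
    have "nrm (C + M) \<le> max (nrm C) (nrm M)" by (rule nrm_ultra)
    also have "\<dots> \<le> B / real p" using cterm mid unfolding C_def M_def by simp
    finally show ?thesis .
  qed
  ultimately have "nrm ((nabla ^^ q) h (of_nat n)) \<le> max (nrm D) (B / real p)"
  proof -
    assume e: "(nabla ^^ q) h (of_nat n) = D + (C + M)" and b: "nrm (C + M) \<le> B / real p"
    have "nrm (D + (C + M)) \<le> max (nrm D) (nrm (C + M))" by (rule nrm_ultra)
    also have "\<dots> \<le> max (nrm D) (B / real p)" using b by (rule max.mono[OF order_refl])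
    finally show ?thesis unfolding e .
  qed
  then have "nrm ((nabla ^^ q) h (of_nat n)) \<le> max (nrm (h (of_nat n + of_nat q) - h (of_nat n))) (B / real p)"
    unfolding D_def .
  then show ?thesis unfolding q_def by simp
qed

end


context cpf
begin

lemma mahler:
  assumes "continuous_on Zp (\<phi> :: 'k \<Rightarrow> 'k)"
  shows "(\<lambda>m. nrm ((nabla ^^ m) \<phi> 0)) \<longlonglongrightarrow> 0"
proof (rule metric_LIMSEQ_I)
  fix r :: real assume r: "r > 0"
  obtain B where B: "B \<ge> 0" "\<And>x. x \<in> Zp \<Longrightarrow> nrm (\<phi> x) \<le> B"
    using cont_bounded[OF assms] by blast
  define e where "e = r / 2"
  have e: "e > 0" using r by (simp add: e_def)
  obtain t0 where t0: "\<And>x. x \<in> Zp \<Longrightarrow> nrm (\<phi> (x + of_nat (p ^ Suc t0)) - \<phi> x) < e"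
    using cont_unif[OF assms e] by blast
  define q where "q = p ^ Suc t0"
  have iter: "nrm ((nabla ^^ (s * q)) \<phi> (of_nat n)) \<le> max e (B * (1 / real p) ^ s)" for s n
  proof (induction s arbitrary: n)
    case 0
    have "nrm (\<phi> (of_nat n)) \<le> B" using B(2) by simp
    then show ?case by simp
  next
    case (Suc s)
    define h where "h = (nabla ^^ (s * q)) \<phi>"
    define Bs where "Bs = max e (B * (1 / real p) ^ s)"
    have hB: "\<And>m. nrm (h (of_nat m)) \<le> Bs" using Suc.IH unfolding h_def Bs_def .
    have Bs0: "0 \<le> Bs" using e unfolding Bs_def by simp
    have eq: "(nabla ^^ (Suc s * q)) \<phi> = (nabla ^^ q) h"
      unfolding h_def by (simp add: funpow_add)
    have diff: "nrm (h (of_nat n + of_nat q) - h (of_nat n)) \<le> e"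
    proof -
      have "h (of_nat n + of_nat q) - h (of_nat n) = (nabla ^^ (s * q)) (\<lambda>z. \<phi> (z + of_nat q) - \<phi> z) (of_nat n)"
        unfolding h_def by (rule nabla_pow_shift_diff)
      moreover have "nrm ((nabla ^^ (s * q)) (\<lambda>z. \<phi> (z + of_nat q) - \<phi> z) (of_nat n)) \<le> e"
      proof (rule nabla_pow_bound)
        fix m
        show "nrm (\<phi> (of_nat m + of_nat q) - \<phi> (of_nat m)) \<le> e"
          using t0[of "of_nat m"] unfolding q_def by simp
      qed (use e in simp)
      ultimately show ?thesis by simp
    qed
    have "nrm ((nabla ^^ q) h (of_nat n)) \<le> max (nrm (h (of_nat n + of_nat q) - h (of_nat n))) (Bs / real p)"
      unfolding q_def by (rule nabla_ppow_bound[of "Suc t0" h Bs n]) (use hB Bs0 in auto)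
    also have "\<dots> \<le> max e (B * (1 / real p) ^ Suc s)"
    proof -
      have "Bs / real p = max (e / real p) (B * (1 / real p) ^ Suc s)"
        unfolding Bs_def using p_gt1 by (simp add: max_divide_distrib_right)
      moreover have "e / real p \<le> e" using p_gt1 e by (simp add: divide_le_eq)
      ultimately have "Bs / real p \<le> max e (B * (1 / real p) ^ Suc s)" by simp
      then show ?thesis using diff by simp
    qed
    finally show ?case using eq by simp
  qed
  obtain s where s: "B * (1 / real p) ^ s \<le> e"
  proof (cases "B = 0")
    case True then show ?thesis using that e by simp
  next
    case False
    then have "e / B > 0" using B e by simp
    then obtain s where "(1 / real p) ^ s < e / B" using ppow_small by blast
    then have "B * (1 / real p) ^ s \<le> e" using B False by (simp add: field_simps)
    then show ?thesis using that by blast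
  qed
  show "\<exists>no. \<forall>m\<ge>no. dist (nrm ((nabla ^^ m) \<phi> 0)) 0 < r"
  proof (intro exI allI impI)
    fix m assume m: "m \<ge> s * q"
    have "(nabla ^^ m) \<phi> = (nabla ^^ (m - s * q)) ((nabla ^^ (s * q)) \<phi>)"
      using m by (simp add: nabla_pow_add[symmetric])
    moreover have "nrm ((nabla ^^ (m - s * q)) ((nabla ^^ (s * q)) \<phi>) (of_nat 0)) \<le> max e (B * (1 / real p) ^ s)"
      by (rule nabla_pow_bound) (use iter e in auto)
    ultimately have "nrm ((nabla ^^ m) \<phi> 0) \<le> e" using s e by simp
    then show "dist (nrm ((nabla ^^ m) \<phi> 0)) 0 < r" using r unfolding e_def by simp
  qed
qed

lemma mahler_bounded:
  assumes "continuous_on Zp (\<phi> :: 'k \<Rightarrow> 'k)"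
  shows "\<exists>K. \<forall>m. nrm ((nabla ^^ m) \<phi> 0) \<le> K"
proof -
  obtain B where B: "B \<ge> 0" "\<And>x. x \<in> Zp \<Longrightarrow> nrm (\<phi> x) \<le> B"
    using cont_bounded[OF assms] by blast
  have "nrm ((nabla ^^ m) \<phi> (of_nat 0)) \<le> B" for m
    by (rule nabla_pow_bound) (use B in auto)
  then show ?thesis by auto
qed

end


context cpf
begin

lemma fact_bound_tendsto: "(\<lambda>k. nrm (fact k :: 'k) * B) \<longlonglongrightarrow> 0"
  using tendsto_mult[OF nrm_fact_tendsto tendsto_const, of B] by simp

lemma Sop_term_bound:
  assumes "x \<in> Zp" "y \<in> Zp" "nrm (c :: 'k) \<le> B"
  shows "nrm ((-1) ^ k * fact k * (y gchoose k) * (x gchoose k) * c) \<le> nrm (fact k :: 'k) * B"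
proof -
  have "nrm ((-1) ^ k * fact k * (y gchoose k) * (x gchoose k) * c) =
        nrm (fact k :: 'k) * (nrm (y gchoose k) * (nrm (x gchoose k) * nrm c))"
    by (simp add: nrm_mult nrm_power)
  also have "\<dots> \<le> nrm (fact k :: 'k) * (1 * (1 * B))"
    using assms Zp_gchoose_nrm[of x k] Zp_gchoose_nrm[of y k]
    by (intro mult_left_mono mult_mono) auto
  finally show ?thesis by simp
qed

lemma Sop_summable:
  assumes "x \<in> Zp" "y \<in> Zp" "\<And>k. nrm (\<phi> (x - of_nat k) :: 'k) \<le> B"
  shows "summable (\<lambda>k. (-1) ^ k * fact k * (y gchoose k) * (x gchoose k) * \<phi> (x - of_nat k))"
  by (rule summable_bound_k[OF Sop_term_bound[OF assms(1,2) assms(3)] fact_bound_tendsto])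

lemma part_i:
  assumes y: "y \<in> Zp" and \<phi>: "continuous_on Zp (\<phi> :: 'k \<Rightarrow> 'k)" and x: "x \<in> Zp"
  shows "Sop y (sigma \<phi>) x = sigma (Sop y \<phi>) x + y * Sop (y - 1) \<phi> x"
proof -
  obtain B where B: "B \<ge> 0" "\<And>z. z \<in> Zp \<Longrightarrow> nrm (\<phi> z) \<le> B"
    using cont_bounded[OF \<phi>] by blast
  define t1 where "t1 k = (-1) ^ k * fact k * (y gchoose k) * (x gchoose k) * sigma \<phi> (x - of_nat k)" for k
  define t2 where "t2 k = (-1) ^ k * fact k * (y gchoose k) * ((x + 1) gchoose k) * \<phi> (x + 1 - of_nat k)" for k
  define t3 where "t3 k = (-1) ^ k * fact k * ((y - 1) gchoose k) * (x gchoose k) * \<phi> (x - of_nat k)" for k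
  have e1: "Sop y (sigma \<phi>) x = suminf t1" unfolding Sop_def t1_def ..
  have e2: "sigma (Sop y \<phi>) x = suminf t2" unfolding Sop_def t2_def sigma_def ..
  have e3: "Sop (y - 1) \<phi> x = suminf t3" unfolding Sop_def t3_def ..
  have s1: "summable t1" unfolding t1_def
    by (rule Sop_summable[OF x y, of _ B]) (use B x in \<open>auto simp: sigma_def\<close>)
  have s2: "summable t2" unfolding t2_def
    by (rule Sop_summable[of "x + 1" y _ B]) (use B x y in auto)
  have s3: "summable t3" unfolding t3_def
    by (rule Sop_summable[of x "y - 1" _ B]) (use B x y in auto)
  define u where "u k = t2 k - t1 k" for k
  have su: "u sums (suminf t2 - suminf t1)"
    unfolding u_def by (intro sums_diff_k summable_sums s1 s2)
  have u0: "u 0 = 0" by (simp add: u_def t1_def t2_def sigma_def)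
  have uS: "u (Suc j) = - y * t3 j" for j
  proof -
    have a1: "sigma \<phi> (x - of_nat (Suc j)) = \<phi> (x - of_nat j)"
      by (simp add: sigma_def algebra_simps)
    have a2: "\<phi> (x + 1 - of_nat (Suc j)) = \<phi> (x - of_nat j)"
      by (simp add: algebra_simps)
    have a3: "((x + 1) gchoose Suc j) - (x gchoose Suc j) = x gchoose j"
      using gbinomial_Suc_Suc[of x j] by simp
    have a4: "(fact (Suc j) :: 'k) * (y gchoose Suc j) = fact j * (y * ((y - 1) gchoose j))"
    proof -
      have "(fact (Suc j) :: 'k) * (y gchoose Suc j) = fact j * (of_nat (Suc j) * (y gchoose Suc j))"
        by (simp only: fact_Suc mult_ac)
      also have "\<dots> = fact j * (y * ((y - 1) gchoose j))" by (simp only: gbinomial_absorption)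
      finally show ?thesis .
    qed
    have "u (Suc j) = (-1) ^ Suc j * (fact (Suc j) * (y gchoose Suc j)) *
                      (((x + 1) gchoose Suc j) - (x gchoose Suc j)) * \<phi> (x - of_nat j)"
      unfolding u_def t1_def t2_def a1 a2 by (simp add: algebra_simps)
    also have "\<dots> = - y * t3 j" unfolding a3 a4 t3_def by (simp add: algebra_simps)
    finally show ?thesis .
  qed
  have "(\<lambda>j. u (Suc j)) sums (suminf t2 - suminf t1 - u 0)" using sums_Suc_k[OF su] .
  then have "(\<lambda>j. - y * t3 j) sums (suminf t2 - suminf t1)" unfolding uS u0 by simp
  moreover have "(\<lambda>j. - y * t3 j) sums (- y * suminf t3)"
    by (intro sums_cmult_k summable_sums s3)
  ultimately have "suminf t2 - suminf t1 = - y * suminf t3" using sums_unique2 by blast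
  then have "suminf t1 = suminf t2 + y * suminf t3" by (simp add: algebra_simps)
  then show ?thesis unfolding e1 e2 e3 .
qed

definition psi :: "'k \<Rightarrow> 'k \<Rightarrow> 'k" where "psi y = one_minus_x_pow y"

lemma psi_nabla:
  assumes "y \<in> Zp" "x \<in> Zp"
  shows "psi y (x + 1) - psi y x = - y * psi (y - 1) x"
proof -
  have s: "sigma (\<lambda>_. 1 :: 'k) = (\<lambda>_. 1)" by (simp add: sigma_def)
  have "Sop y (sigma (\<lambda>_. 1)) x = sigma (Sop y (\<lambda>_. 1)) x + y * Sop (y - 1) (\<lambda>_. 1 :: 'k) x"
    by (rule part_i) (use assms in \<open>auto intro: continuous_on_const\<close>)
  then show ?thesis unfolding s psi_def one_minus_x_pow_def sigma_def by (simp add: algebra_simps)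
qed

lemma psi_at0: "psi y 0 = 1"
proof -
  have "(\<lambda>k. (-1) ^ k * fact k * (y gchoose k) * ((0::'k) gchoose k) * 1) =
        (\<lambda>k. if k = 0 then 1 else 0)"
    by (auto simp: gbinomial_0_left)
  moreover have "(\<lambda>k. if k = 0 then (\<lambda>_. 1::'k) k else 0) sums 1" using sums_single[of 0 "\<lambda>_. 1::'k"] by simp
  ultimately show ?thesis unfolding psi_def one_minus_x_pow_def Sop_def
    by (simp add: sums_iff)
qed

lemma psi_nabla_pow:
  assumes "y \<in> Zp"
  shows "(nabla ^^ k) (psi y) (of_nat m) = (-1) ^ k * fact k * (y gchoose k) * psi (y - of_nat k) (of_nat m)"
  using assms
proof (induction k arbitrary: y m)
  case 0 then show ?case by simp
next
  case (Suc k)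
  have loc: "(nabla ^^ k) (nabla (psi y)) (of_nat m) = (nabla ^^ k) (\<lambda>z. (- y) * psi (y - 1) z) (of_nat m)"
    by (rule nabla_pow_local_nat) (simp add: nabla_def psi_nabla Suc.prems)
  have y1: "y - 1 \<in> Zp" using Suc.prems by simp
  have "(nabla ^^ Suc k) (psi y) (of_nat m) = - y * ((-1) ^ k * fact k * ((y - 1) gchoose k) * psi (y - 1 - of_nat k) (of_nat m))"
    unfolding nabla_Suc_right loc nabla_pow_cmult Suc.IH[OF y1] ..
  also have "\<dots> = (-1) ^ Suc k * fact (Suc k) * (y gchoose Suc k) * psi (y - of_nat (Suc k)) (of_nat m)"
  proof -
    have F: "(fact (Suc k) :: 'k) * (y gchoose Suc k) = fact k * (y * ((y - 1) gchoose k))"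
    proof -
      have "(fact (Suc k) :: 'k) * (y gchoose Suc k) = fact k * (of_nat (Suc k) * (y gchoose Suc k))"
        by (simp only: fact_Suc mult_ac)
      also have "\<dots> = fact k * (y * ((y - 1) gchoose k))" by (simp only: gbinomial_absorption)
      finally show ?thesis .
    qed
    have Pq: "y - of_nat (Suc k) = y - 1 - of_nat k" by simp
    define Q where "Q = psi (y - 1 - of_nat k) (of_nat m)"
    have "(-1) ^ Suc k * fact (Suc k) * (y gchoose Suc k) * Q = (-1) ^ Suc k * (fact (Suc k) * (y gchoose Suc k)) * Q"
      by (simp only: mult.assoc)
    also have "\<dots> = (-1) ^ Suc k * (fact k * (y * ((y - 1) gchoose k))) * Q" by (simp only: F)
    also have "\<dots> = - y * ((-1) ^ k * fact k * ((y - 1) gchoose k) * Q)" by (simp add: algebra_simps)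
    finally show ?thesis unfolding Pq Q_def by (rule sym)
  qed
  finally show ?case .
qed

lemma psi_coeff:
  assumes "y \<in> Zp"
  shows "(nabla ^^ k) (psi y) 0 = (-1) ^ k * fact k * (y gchoose k)"
  using psi_nabla_pow[OF assms, of k 0] by (simp add: psi_at0)

end


context cpf
begin

definition coef :: "(nat \<Rightarrow> 'k) \<Rightarrow> (nat \<Rightarrow> 'k) \<Rightarrow> nat \<Rightarrow> 'k" where
  "coef A B n = (\<Sum>k\<le>n. of_nat (n choose k) * A k * B (n - k))"

definition convc :: "(nat \<Rightarrow> 'k) \<Rightarrow> (nat \<Rightarrow> 'k) \<Rightarrow> 'k \<Rightarrow> 'k" where
  "convc A B x = (\<Sum>n. coef A B n * (x gchoose n))"

lemma conv_convc: "conv \<psi> \<phi> x = convc (\<lambda>k. (nabla ^^ k) \<psi> 0) (\<lambda>k. (nabla ^^ k) (\<phi> :: 'k \<Rightarrow> 'k) 0) x"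
  unfolding conv_def convc_def coef_def ..

lemma tendsto0_bounded:
  assumes "(\<lambda>k. nrm (A k :: 'k)) \<longlonglongrightarrow> 0"
  obtains K where "K > 0" "\<And>k. nrm (A k) \<le> K"
proof -
  have "Bseq (\<lambda>k. nrm (A k))" using assms by (intro convergent_imp_Bseq convergentI)
  then obtain K where "K > 0" "\<forall>k. norm (nrm (A k)) \<le> K" by (rule BseqE)
  then show ?thesis using that by simp
qed

lemma tendsto0_eventually:
  assumes "(\<lambda>k. nrm (A k :: 'k)) \<longlonglongrightarrow> 0" "r > 0"
  obtains N where "\<And>k. k \<ge> N \<Longrightarrow> nrm (A k) < r"
proof -
  have "\<exists>N. \<forall>k\<ge>N. \<bar>nrm (A k) - 0\<bar> < r" using assms unfolding lim_sequentially dist_real_def by blast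
  then show ?thesis using that by auto
qed

lemma coef_tendsto:
  assumes A: "(\<lambda>k. nrm (A k :: 'k)) \<longlonglongrightarrow> 0" and B: "(\<lambda>k. nrm (B k :: 'k)) \<longlonglongrightarrow> 0"
  shows "(\<lambda>n. nrm (coef A B n)) \<longlonglongrightarrow> 0"
proof (rule metric_LIMSEQ_I)
  fix r :: real assume r: "r > 0"
  obtain a where a: "a > 0" "\<And>k. nrm (A k) \<le> a" using tendsto0_bounded[OF A] by blast
  obtain b where b: "b > 0" "\<And>k. nrm (B k) \<le> b" using tendsto0_bounded[OF B] by blast
  obtain N1 where N1: "\<And>k. k \<ge> N1 \<Longrightarrow> nrm (A k) < r / (2 * b)"
    using tendsto0_eventually[OF A, of "r / (2 * b)"] r b by auto
  obtain N2 where N2: "\<And>k. k \<ge> N2 \<Longrightarrow> nrm (B k) < r / (2 * a)"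
    using tendsto0_eventually[OF B, of "r / (2 * a)"] r a by auto
  show "\<exists>no. \<forall>n\<ge>no. dist (nrm (coef A B n)) 0 < r"
  proof (intro exI allI impI)
    fix n assume n: "n \<ge> N1 + N2"
    have "nrm (coef A B n) \<le> r / 2" unfolding coef_def
    proof (rule nrm_sum_le)
      fix k assume k: "k \<in> {..n}"
      have "nrm (of_nat (n choose k) * A k * B (n - k)) \<le> nrm (A k) * nrm (B (n - k))"
        unfolding nrm_mult mult.assoc
        by (rule mult_left_le_one_le) (simp_all add: nrm_of_nat_le)
      also have "\<dots> \<le> r / 2"
      proof (cases "k \<ge> N1")
        case True
        have "nrm (A k) * nrm (B (n - k)) \<le> (r / (2 * b)) * b"
          using N1[OF True] b r by (intro mult_mono) auto
        then show ?thesis using b by simp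
      next
        case False
        then have "n - k \<ge> N2" using n by auto
        have "nrm (A k) * nrm (B (n - k)) \<le> a * (r / (2 * a))"
          using N2[OF \<open>n - k \<ge> N2\<close>] a r by (intro mult_mono) auto
        then show ?thesis using a by simp
      qed
      finally show "nrm (of_nat (n choose k) * A k * B (n - k)) \<le> r / 2" .
    qed (use r in simp)
    then show "dist (nrm (coef A B n)) 0 < r" using r by simp
  qed
qed

lemma convc_summable:
  assumes "(\<lambda>n. nrm (c n :: 'k)) \<longlonglongrightarrow> 0" "x \<in> Zp"
  shows "summable (\<lambda>n. c n * (x gchoose n))"
proof (rule summable_bound_k[OF _ assms(1)])
  fix n show "nrm (c n * (x gchoose n)) \<le> nrm (c n)"
    using Zp_gchoose_nrm[OF assms(2), of n] by (simp add: nrm_mult mult_left_le)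
qed

lemma coef_identity:
  "coef A (\<lambda>k. B k + B (Suc k)) n = coef A B n + coef A B (Suc n) - coef (\<lambda>k. A (Suc k)) B n"
proof -
  define W where "W = (\<Sum>k\<le>n. of_nat (n choose k) * A k * B (Suc (n - k)))"
  define V where "V = (\<Sum>k<n. of_nat (n choose Suc k) * A (Suc k) * B (Suc (n - Suc k)))"
  have e: "coef A (\<lambda>k. B k + B (Suc k)) n = coef A B n + W"
    unfolding coef_def W_def by (simp add: sum.distrib[symmetric] algebra_simps Suc_diff_le)
  have W: "W = A 0 * B (Suc n) + V"
    unfolding W_def V_def by (subst sum.atMost_shift) simp
  have X: "(\<Sum>k\<le>n. of_nat (n choose Suc k) * A (Suc k) * B (n - k)) = V"
  proof -
    have "(\<Sum>k\<le>n. of_nat (n choose Suc k) * A (Suc k) * B (n - k)) =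
          (\<Sum>k<Suc n. of_nat (n choose Suc k) * A (Suc k) * B (n - k))"
      by (simp only: lessThan_Suc_atMost)
    also have "\<dots> = (\<Sum>k<n. of_nat (n choose Suc k) * A (Suc k) * B (n - k))" by simp
    also have "\<dots> = V" unfolding V_def
      by (rule sum.cong) (auto simp: Suc_diff_Suc)
    finally show ?thesis .
  qed
  have "coef A B (Suc n) = A 0 * B (Suc n) +
          (\<Sum>k\<le>n. of_nat (Suc n choose Suc k) * A (Suc k) * B (n - k))"
    unfolding coef_def by (subst sum.atMost_Suc_shift) simp
  also have "(\<Sum>k\<le>n. of_nat (Suc n choose Suc k) * A (Suc k) * B (n - k)) =
             coef (\<lambda>k. A (Suc k)) B n + (\<Sum>k\<le>n. of_nat (n choose Suc k) * A (Suc k) * B (n - k))"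
    unfolding coef_def by (simp add: sum.distrib[symmetric] algebra_simps)
  finally have "coef A B (Suc n) = coef (\<lambda>k. A (Suc k)) B n + W"
    unfolding X W by (simp add: algebra_simps)
  then show ?thesis using e by (simp add: algebra_simps)
qed

lemma conv_shift:
  assumes A: "(\<lambda>k. nrm (A k :: 'k)) \<longlonglongrightarrow> 0" and B: "(\<lambda>k. nrm (B k :: 'k)) \<longlonglongrightarrow> 0"
    and x: "x \<in> Zp"
  shows "convc A (\<lambda>k. B k + B (Suc k)) x = convc A B (x + 1) - convc (\<lambda>k. A (Suc k)) B x"
proof -
  define c where "c = coef A B"
  define d where "d = coef (\<lambda>k. A (Suc k)) B"
  have A': "(\<lambda>k. nrm (A (Suc k))) \<longlonglongrightarrow> 0" using A by (rule LIMSEQ_Suc)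
  have ct: "(\<lambda>n. nrm (c n)) \<longlonglongrightarrow> 0" unfolding c_def by (rule coef_tendsto[OF A B])
  have dt: "(\<lambda>n. nrm (d n)) \<longlonglongrightarrow> 0" unfolding d_def by (rule coef_tendsto[OF A' B])
  have x1: "x + 1 \<in> Zp" using x by simp
  have sc: "(\<lambda>n. c n * (x gchoose n)) sums convc A B x"
    unfolding convc_def c_def by (rule summable_sums, fold c_def, rule convc_summable[OF ct x])
  have sd: "(\<lambda>n. d n * (x gchoose n)) sums convc (\<lambda>k. A (Suc k)) B x"
    unfolding convc_def d_def by (rule summable_sums, fold d_def, rule convc_summable[OF dt x])
  have sw: "(\<lambda>n. c n * ((x + 1) gchoose n)) sums convc A B (x + 1)"
    unfolding convc_def c_def by (rule summable_sums, fold c_def, rule convc_summable[OF ct x1])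
  have w1: "(\<lambda>m. c (Suc m) * ((x + 1) gchoose Suc m)) sums (convc A B (x + 1) - c 0)"
    using sums_Suc_k[OF sw] by simp
  have v1: "(\<lambda>m. c (Suc m) * (x gchoose Suc m)) sums (convc A B x - c 0)"
    using sums_Suc_k[OF sc] by simp
  have "(\<lambda>m. c (Suc m) * ((x + 1) gchoose Suc m) - c (Suc m) * (x gchoose Suc m)) sums
          ((convc A B (x + 1) - c 0) - (convc A B x - c 0))"
    by (rule sums_diff_k[OF w1 v1])
  moreover have "c (Suc m) * ((x + 1) gchoose Suc m) - c (Suc m) * (x gchoose Suc m) = c (Suc m) * (x gchoose m)" for m
    using gbinomial_Suc_Suc[of x m] by (simp add: algebra_simps)
  ultimately have s2: "(\<lambda>m. c (Suc m) * (x gchoose m)) sums (convc A B (x + 1) - convc A B x)" by simp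
  have "(\<lambda>n. c n * (x gchoose n) + c (Suc n) * (x gchoose n) - d n * (x gchoose n)) sums
          (convc A B x + (convc A B (x + 1) - convc A B x) - convc (\<lambda>k. A (Suc k)) B x)"
    by (intro sums_diff_k sums_add_k sc s2 sd)
  moreover have "c n * (x gchoose n) + c (Suc n) * (x gchoose n) - d n * (x gchoose n) =
                 coef A (\<lambda>k. B k + B (Suc k)) n * (x gchoose n)" for n
    unfolding c_def d_def coef_identity by (simp add: algebra_simps)
  ultimately have "(\<lambda>n. coef A (\<lambda>k. B k + B (Suc k)) n * (x gchoose n)) sums
                    (convc A B (x + 1) - convc (\<lambda>k. A (Suc k)) B x)" by simp
  then show ?thesis unfolding convc_def by (simp add: sums_iff)
qed

lemma coef_cmult: "coef (\<lambda>k. a * A k) B n = a * coef A B n"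
  unfolding coef_def by (simp add: sum_distrib_left algebra_simps)

lemma convc_cmult:
  assumes "(\<lambda>k. nrm (A k :: 'k)) \<longlonglongrightarrow> 0" "(\<lambda>k. nrm (B k :: 'k)) \<longlonglongrightarrow> 0" "x \<in> Zp"
  shows "convc (\<lambda>k. a * A k) B x = a * convc A B x"
proof -
  have "summable (\<lambda>n. coef A B n * (x gchoose n))"
    by (rule convc_summable[OF coef_tendsto[OF assms(1,2)] assms(3)])
  then show ?thesis unfolding convc_def coef_cmult
    using suminf_cmult_k by (simp add: mult.assoc)
qed

lemma nabla_pow_sigma0:
  "(nabla ^^ k) (sigma \<phi>) 0 = (nabla ^^ k) (\<phi> :: 'k \<Rightarrow> 'k) 0 + (nabla ^^ Suc k) \<phi> 0"
  by (simp add: nabla_pow_sigma nabla_Suc del: funpow.simps)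

lemma psi_coeff_Suc:
  assumes "y \<in> Zp"
  shows "(nabla ^^ Suc k) (psi y) 0 = - y * (nabla ^^ k) (psi (y - 1)) 0"
proof -
  have "(nabla ^^ k) (nabla (psi y)) (of_nat 0) = (nabla ^^ k) (\<lambda>z. (- y) * psi (y - 1) z) (of_nat 0)"
    by (rule nabla_pow_local_nat) (simp add: nabla_def psi_nabla assms)
  then show ?thesis unfolding nabla_Suc_right nabla_pow_cmult by simp
qed

lemma psi_coeff_tendsto:
  assumes "y \<in> Zp"
  shows "(\<lambda>k. nrm ((nabla ^^ k) (psi y) 0)) \<longlonglongrightarrow> 0"
proof (rule tendsto0_bound[OF _ fact_bound_tendsto[of 1]])
  fix k
  show "nrm ((nabla ^^ k) (psi y) 0) \<le> nrm (fact k :: 'k) * 1"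
    unfolding psi_coeff[OF assms] using Zp_gchoose_nrm[OF assms, of k]
    by (simp add: nrm_mult nrm_power mult_left_le)
qed

lemma part_ii_conv:
  assumes y: "y \<in> Zp" and \<phi>: "continuous_on Zp (\<phi> :: 'k \<Rightarrow> 'k)" and x: "x \<in> Zp"
  shows "conv (one_minus_x_pow y) (sigma \<phi>) x =
         conv (one_minus_x_pow y) \<phi> (x + 1) + y * conv (one_minus_x_pow (y - 1)) \<phi> x"
proof -
  define A where "A k = (nabla ^^ k) (psi y) 0" for k
  define A2 where "A2 k = (nabla ^^ k) (psi (y - 1)) 0" for k
  define B where "B k = (nabla ^^ k) \<phi> 0" for k
  have y1: "y - 1 \<in> Zp" using y by simp
  have At: "(\<lambda>k. nrm (A k)) \<longlonglongrightarrow> 0" unfolding A_def by (rule psi_coeff_tendsto[OF y])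
  have A2t: "(\<lambda>k. nrm (A2 k)) \<longlonglongrightarrow> 0" unfolding A2_def by (rule psi_coeff_tendsto[OF y1])
  have Bt: "(\<lambda>k. nrm (B k)) \<longlonglongrightarrow> 0" unfolding B_def by (rule mahler[OF \<phi>])
  have "conv (one_minus_x_pow y) (sigma \<phi>) x = convc A (\<lambda>k. B k + B (Suc k)) x"
    unfolding conv_convc A_def B_def psi_def nabla_pow_sigma0 ..
  also have "\<dots> = convc A B (x + 1) - convc (\<lambda>k. A (Suc k)) B x"
    by (rule conv_shift[OF At Bt x])
  also have "(\<lambda>k. A (Suc k)) = (\<lambda>k. - y * A2 k)"
    unfolding A_def A2_def using psi_coeff_Suc[OF y] by simp
  also have "convc (\<lambda>k. - y * A2 k) B x = - y * convc A2 B x"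
    by (rule convc_cmult[OF A2t Bt x])
  finally show ?thesis unfolding conv_convc A_def A2_def B_def psi_def by simp
qed

end


context cpf
begin

lemma continuous_on_cmult_k:
  "continuous_on S (f :: 'k \<Rightarrow> 'k) \<Longrightarrow> continuous_on S (\<lambda>x. c * f x)"
  unfolding continuous_on_def by (auto intro: tendsto_mult_k tendsto_const)

lemma continuous_on_gchoose_k: "continuous_on S (\<lambda>x::'k. x gchoose k)"
  unfolding continuous_on_def by (auto intro: tendsto_gchoose_k tendsto_ident_at)

lemma continuous_on_sum_k:
  "(\<And>k. k \<in> K \<Longrightarrow> continuous_on S (f k :: 'k \<Rightarrow> 'k)) \<Longrightarrow> continuous_on S (\<lambda>x. \<Sum>k\<in>K. f k x)"
  unfolding continuous_on_def by (auto intro: tendsto_sum_k)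

lemma series_cont:
  assumes cont: "\<And>k. continuous_on S (f k :: 'k \<Rightarrow> 'k)"
    and bnd: "\<And>k x. x \<in> S \<Longrightarrow> nrm (f k x) \<le> g k" and g: "g \<longlonglongrightarrow> 0"
  shows "continuous_on S (\<lambda>x. \<Sum>k. f k x)"
proof (rule uniform_limit_theorem[where f="\<lambda>n x. \<Sum>k<n. f k x" and F=sequentially])
  show "\<forall>\<^sub>F n in sequentially. continuous_on S (\<lambda>x. \<Sum>k<n. f k x)"
    by (intro always_eventually allI continuous_on_sum_k cont)
  show "\<not> trivial_limit sequentially" by simp
  show "uniform_limit S (\<lambda>n x. \<Sum>k<n. f k x) (\<lambda>x. \<Sum>k. f k x) sequentially"
    unfolding uniform_limit_sequentially_iff
  proof (intro allI impI)
    fix e :: real assume e: "e > 0"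
    then have "\<exists>N. \<forall>k\<ge>N. \<bar>g k - 0\<bar> < e / 2" using g unfolding lim_sequentially dist_real_def
      by (metis half_gt_zero)
    then obtain N where N: "\<And>k. k \<ge> N \<Longrightarrow> \<bar>g k\<bar> < e / 2" by auto
    show "\<exists>N. \<forall>n\<ge>N. \<forall>x\<in>S. dist (\<Sum>k<n. f k x) (\<Sum>k. f k x) < e"
    proof (intro exI allI impI ballI)
      fix n x assume n: "n \<ge> N" and x: "x \<in> S"
      have sm: "summable (\<lambda>k. f k x)"
      proof (rule summable_bound_k[of _ "\<lambda>k. \<bar>g k\<bar>"])
        show "nrm (f k x) \<le> \<bar>g k\<bar>" for k using bnd[OF x, of k] by simp
        show "(\<lambda>k. \<bar>g k\<bar>) \<longlonglongrightarrow> 0" using tendsto_rabs[OF g] by simp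
      qed
      have "nrm ((\<Sum>k. f k x) - (\<Sum>k<n. f k x)) \<le> e / 2"
      proof (rule nrm_tail_le[OF sm])
        fix k assume "k \<ge> n"
        then show "nrm (f k x) \<le> e / 2" using bnd[OF x, of k] N[of k] n by simp
      qed (use e in simp)
      then show "dist (\<Sum>k<n. f k x) (\<Sum>k. f k x) < e"
        using e by (simp add: dist_nrm nrm_commute)
    qed
  qed
qed

lemma psi_eq: "psi y x = (\<Sum>k. (-1) ^ k * fact k * (y gchoose k) * (x gchoose k) * 1)"
  unfolding psi_def one_minus_x_pow_def Sop_def ..

lemma psi_bound:
  assumes "y \<in> Zp" "x \<in> Zp"
  shows "nrm (psi y x) \<le> 1"
proof -
  have t: "nrm ((-1) ^ k * fact k * (y gchoose k) * (x gchoose k) * 1 :: 'k) \<le> nrm (fact k :: 'k) * 1" for k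
    by (rule Sop_term_bound) (use assms in auto)
  have "summable (\<lambda>k. (-1) ^ k * fact k * (y gchoose k) * (x gchoose k) * (1::'k))"
    by (rule summable_bound_k[OF t fact_bound_tendsto])
  moreover have "nrm ((-1) ^ k * fact k * (y gchoose k) * (x gchoose k) * 1 :: 'k) \<le> 1" for k
  proof -
    have "nrm (fact k :: 'k) \<le> 1" using nrm_of_nat_le[of "fact k"] by (simp only: of_nat_fact)
    then show ?thesis using t[of k] by simp
  qed
  ultimately show ?thesis unfolding psi_eq by (rule nrm_suminf_le) simp
qed

lemma psi_cont:
  assumes "y \<in> Zp"
  shows "continuous_on Zp (psi y)"
proof -
  have "continuous_on Zp (\<lambda>x. \<Sum>k. (-1) ^ k * fact k * (y gchoose k) * (x gchoose k) * (1::'k))"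
  proof (rule series_cont)
    show "continuous_on Zp (\<lambda>x. (-1) ^ k * fact k * (y gchoose k) * (x gchoose k) * (1::'k))" for k
    proof -
      have "continuous_on Zp (\<lambda>x. ((-1) ^ k * fact k * (y gchoose k)) * (x gchoose k) :: 'k)"
        by (rule continuous_on_cmult_k[OF continuous_on_gchoose_k])
      then show ?thesis by simp
    qed
    show "nrm ((-1) ^ k * fact k * (y gchoose k) * (x gchoose k) * (1::'k)) \<le> nrm (fact k :: 'k) * 1"
      if "x \<in> Zp" for k x by (rule Sop_term_bound) (use assms that in auto)
    show "(\<lambda>k. nrm (fact k :: 'k) * 1) \<longlonglongrightarrow> 0" by (rule fact_bound_tendsto)
  qed
  then show ?thesis unfolding psi_eq[abs_def] .
qed

lemma nrm_powi_m1[simp]: "nrm ((-1 :: 'k) powi n) = 1"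
  unfolding power_int_def by (simp add: nrm_power)

lemma powi_m1_pred: "(-1 :: 'k) powi (n - 1) = - ((-1) powi n)"
  using power_int_diff[of "-1 :: 'k" n 1] by simp

lemma xmo_eq: "x_minus_one_pow n = (\<lambda>x. (-1) powi n * psi (of_int n) x)"
  unfolding x_minus_one_pow_def psi_def one_minus_x_pow_def ..

lemma xmo_bound: "x \<in> Zp \<Longrightarrow> nrm (x_minus_one_pow n x :: 'k) \<le> 1"
  unfolding xmo_eq using psi_bound[of "of_int n" x] by (simp add: nrm_mult)

lemma xmo_cont: "continuous_on Zp (x_minus_one_pow n :: 'k \<Rightarrow> 'k)"
  unfolding xmo_eq by (intro continuous_on_cmult_k psi_cont) simp

lemma xmo_nabla:
  assumes "x \<in> Zp"
  shows "x_minus_one_pow n (x + 1) - x_minus_one_pow n x = of_int n * x_minus_one_pow (n - 1) (x :: 'k)"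
proof -
  have "psi (of_int n) (x + 1) - psi (of_int n) x = - of_int n * psi (of_int n - 1) x"
    by (rule psi_nabla) (use assms in auto)
  then have "(-1) powi n * psi (of_int n) (x + 1) - (-1) powi n * psi (of_int n) x =
        (-1) powi n * (- of_int n * psi (of_int n - 1) x)"
    by (simp only: right_diff_distrib[symmetric])
  also have "\<dots> = of_int n * (- ((-1) powi n) * psi (of_int (n - 1)) x)"
    by (simp add: mult_ac)
  finally show ?thesis unfolding xmo_eq powi_m1_pred .
qed

lemma xmo_coeff_bound: "nrm ((nabla ^^ k) (x_minus_one_pow n) (0::'k)) \<le> nrm (fact k :: 'k)"
proof -
  have "(nabla ^^ k) (x_minus_one_pow n) (0::'k) = (-1) powi n * ((-1) ^ k * fact k * (of_int n gchoose k))"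
    unfolding xmo_eq nabla_pow_cmult psi_coeff[OF of_int_Zp] ..
  then show ?thesis using Zp_gchoose_nrm[OF of_int_Zp, of n k]
    by (simp add: nrm_mult nrm_power mult_left_le)
qed

lemma cont_eq_on_nat:
  assumes f: "continuous_on Zp (f :: 'k \<Rightarrow> 'k)" and g: "continuous_on Zp g"
    and eq: "\<And>m. f (of_nat m) = g (of_nat m)" and x: "x \<in> Zp"
  shows "f x = g x"
proof -
  have "\<forall>j. \<exists>m::nat. nrm (x - of_nat m) < inverse (real (Suc j))"
    using Zp_approx_nat[OF x] by simp
  then obtain s where s: "\<And>j. nrm (x - of_nat (s j)) < inverse (real (Suc j))" by metis
  have lim: "(\<lambda>j. of_nat (s j) :: 'k) \<longlonglongrightarrow> x"
  proof (rule metric_LIMSEQ_I)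
    fix r :: real assume r: "r > 0"
    obtain N where N: "N > 0" "inverse (real N) < r" using ex_inverse_of_nat_less[OF r] by auto
    show "\<exists>no. \<forall>n\<ge>no. dist (of_nat (s n)) x < r"
    proof (intro exI allI impI)
      fix n assume "n \<ge> N"
      then have i1: "inverse (real (Suc n)) \<le> inverse (real N)" using N by (intro le_imp_inverse_le) auto
      have "nrm (x - of_nat (s n)) < r" using s[of n] i1 N(2) by linarith
      then show "dist (of_nat (s n)) x < r" by (simp add: dist_nrm nrm_commute)
    qed
  qed
  have "(\<lambda>j. f (of_nat (s j))) \<longlonglongrightarrow> f x"
    by (rule continuous_on_tendsto_compose[OF f lim x]) simp
  moreover have "(\<lambda>j. g (of_nat (s j))) \<longlonglongrightarrow> g x"
    by (rule continuous_on_tendsto_compose[OF g lim x]) simp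
  ultimately show ?thesis unfolding eq using LIMSEQ_unique by metis
qed

lemma sums_sum_k:
  assumes "\<And>i. i \<in> I \<Longrightarrow> (\<lambda>j. g i j) sums (s i :: 'k)"
  shows "(\<lambda>j. \<Sum>i\<in>I. g i j) sums (\<Sum>i\<in>I. s i)"
  using assms
proof (induction I rule: infinite_finite_induct)
  case (infinite I) then show ?case by (simp add: sums_zero)
next
  case empty then show ?case by (simp add: sums_zero)
next
  case (insert x F)
  then show ?case by (simp add: sums_add_k)
qed

end


context cpf
begin

definition Gf :: "int \<Rightarrow> (int \<Rightarrow> 'k) \<Rightarrow> 'k \<Rightarrow> 'k" where
  "Gf N a = (\<lambda>x. if x \<in> Zp then (\<Sum>k. of_int (N - int k) * a (N - int k) *
                                   x_minus_one_pow (N - int k - 1) x) else 0)"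

lemma a_tendsto:
  assumes "(a \<longlongrightarrow> (0::'k)) at_bot"
  shows "(\<lambda>j. nrm (a (N - int j))) \<longlonglongrightarrow> 0"
proof (rule metric_LIMSEQ_I)
  fix r :: real assume r: "r > 0"
  have "eventually (\<lambda>n. dist (a n) 0 < r) at_bot" using assms r unfolding tendsto_iff by blast
  then obtain N0 where N0: "\<And>n. n \<le> N0 \<Longrightarrow> dist (a n) 0 < r" unfolding eventually_at_bot_linorder by blast
  show "\<exists>no. \<forall>j\<ge>no. dist (nrm (a (N - int j))) 0 < r"
  proof (intro exI allI impI)
    fix j assume "j \<ge> nat (N - N0)"
    then have "N - int j \<le> N0" by linarith
    then show "dist (nrm (a (N - int j))) 0 < r" using N0 by (simp add: nrm_def)
  qed
qed

lemma rep_sums: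
  assumes "A_rep N a \<psi>" "x \<in> Zp"
  shows "(\<lambda>k. a (N - int k) * x_minus_one_pow (N - int k) x) sums (\<psi> x :: 'k)"
proof -
  have at: "(\<lambda>j. nrm (a (N - int j))) \<longlonglongrightarrow> 0" using assms(1) unfolding A_rep_def by (intro a_tendsto) blast
  have "summable (\<lambda>k. a (N - int k) * x_minus_one_pow (N - int k) x)"
  proof (rule summable_bound_k[OF _ at])
    fix k show "nrm (a (N - int k) * x_minus_one_pow (N - int k) x) \<le> nrm (a (N - int k))"
      using xmo_bound[OF assms(2), of "N - int k"] by (simp add: nrm_mult mult_left_le)
  qed
  then show ?thesis using assms unfolding A_rep_def by (simp add: summable_sums)
qed

lemma G_term_bound:
  assumes "x \<in> Zp"
  shows "nrm (of_int (N - int k) * a (N - int k) * x_minus_one_pow (N - int k - 1) x :: 'k) \<le> nrm (a (N - int k))"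
proof -
  have "nrm (of_int (N - int k) * a (N - int k) * x_minus_one_pow (N - int k - 1) x :: 'k) =
        nrm (a (N - int k)) * (nrm (of_int (N - int k) :: 'k) * nrm (x_minus_one_pow (N - int k - 1) x))"
    by (simp add: nrm_mult mult_ac)
  also have "\<dots> \<le> nrm (a (N - int k)) * (1 * 1)"
    using nrm_of_int_le[of "N - int k"] xmo_bound[OF assms, of "N - int k - 1"]
    by (intro mult_left_mono mult_mono) auto
  finally show ?thesis by simp
qed

lemma G_nat:
  assumes rep: "A_rep N a \<psi>"
  shows "Gf N a (of_nat m) = \<psi> (of_nat m + 1) - \<psi> (of_nat m)"
proof -
  define x where "x = (of_nat m :: 'k)"
  have x: "x \<in> Zp" "x + 1 \<in> Zp" unfolding x_def by simp_all
  have "(\<lambda>k. a (N - int k) * x_minus_one_pow (N - int k) (x + 1) - a (N - int k) * x_minus_one_pow (N - int k) x)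
          sums (\<psi> (x + 1) - \<psi> x)"
    by (intro sums_diff_k rep_sums[OF rep] x)
  moreover have "a (N - int k) * x_minus_one_pow (N - int k) (x + 1) - a (N - int k) * x_minus_one_pow (N - int k) x
        = of_int (N - int k) * a (N - int k) * x_minus_one_pow (N - int k - 1) x" for k
  proof -
    have "a (N - int k) * x_minus_one_pow (N - int k) (x + 1) - a (N - int k) * x_minus_one_pow (N - int k) x
        = a (N - int k) * (x_minus_one_pow (N - int k) (x + 1) - x_minus_one_pow (N - int k) x)"
      by (simp only: right_diff_distrib)
    also have "\<dots> = a (N - int k) * (of_int (N - int k) * x_minus_one_pow (N - int k - 1) x)"
      by (simp only: xmo_nabla[OF x(1)])
    finally show ?thesis by (simp add: mult_ac)
  qed
  ultimately have "(\<lambda>k. of_int (N - int k) * a (N - int k) * x_minus_one_pow (N - int k - 1) x) sums (\<psi> (x + 1) - \<psi> x)"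
    by simp
  then show ?thesis unfolding Gf_def x_def[symmetric] using x by (simp add: sums_iff)
qed

lemma G_cont:
  assumes rep: "A_rep N a \<psi>"
  shows "continuous_on Zp (Gf N a)"
proof -
  have at: "(\<lambda>j. nrm (a (N - int j))) \<longlonglongrightarrow> 0" using rep unfolding A_rep_def by (intro a_tendsto) blast
  have "continuous_on Zp (\<lambda>x. \<Sum>k. of_int (N - int k) * a (N - int k) * x_minus_one_pow (N - int k - 1) x)"
  proof (rule series_cont[OF _ _ at])
    show "continuous_on Zp (\<lambda>x. of_int (N - int k) * a (N - int k) * x_minus_one_pow (N - int k - 1) x)" for k
      by (rule continuous_on_cmult_k[OF xmo_cont])
    show "nrm (of_int (N - int k) * a (N - int k) * x_minus_one_pow (N - int k - 1) x) \<le> nrm (a (N - int k))"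
      if "x \<in> Zp" for k x by (rule G_term_bound[OF that])
  qed
  then show ?thesis unfolding Gf_def by (rule continuous_on_cong[THEN iffD1, rotated 2]) auto
qed

lemma Dop_eq:
  assumes rep: "A_rep N a \<psi>"
  shows "Dop \<psi> = Gf N a"
  unfolding Dop_def
proof (rule the_equality)
  show "\<exists>N' a'. A_rep N' a' \<psi> \<and> Gf N a = (\<lambda>x. if x \<in> Zp then (\<Sum>k. of_int (N' - int k) * a' (N' - int k) *
                                   x_minus_one_pow (N' - int k - 1) x) else 0)"
    using rep unfolding Gf_def by blast
  fix g assume "\<exists>N' a'. A_rep N' a' \<psi> \<and> g = (\<lambda>x. if x \<in> Zp then (\<Sum>k. of_int (N' - int k) * a' (N' - int k) *
                                   x_minus_one_pow (N' - int k - 1) x) else 0)"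
  then obtain N' a' where rep': "A_rep N' a' \<psi>" and g: "g = Gf N' a'" unfolding Gf_def by blast
  show "g = Gf N a"
  proof
    fix x
    show "g x = Gf N a x"
    proof (cases "x \<in> Zp")
      case True
      show ?thesis unfolding g
        by (rule cont_eq_on_nat[OF G_cont[OF rep'] G_cont[OF rep] _ True]) (simp add: G_nat[OF rep] G_nat[OF rep'])
    next
      case False then show ?thesis unfolding g Gf_def by simp
    qed
  qed
qed

lemma A_coeff_tendsto:
  assumes rep: "A_rep N a \<psi>"
  shows "(\<lambda>k. nrm ((nabla ^^ k) \<psi> (0::'k))) \<longlonglongrightarrow> 0"
proof -
  have at: "(\<lambda>j. nrm (a (N - int j))) \<longlonglongrightarrow> 0" using rep unfolding A_rep_def by (intro a_tendsto) blast
  obtain \<alpha> where \<alpha>: "\<alpha> > 0" "\<And>j. nrm (a (N - int j)) \<le> \<alpha>" using tendsto0_bounded[OF at] by blast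
  have bnd: "nrm ((nabla ^^ k) \<psi> (0::'k)) \<le> nrm (fact k :: 'k) * \<alpha>" for k
  proof -
    define c where "c i = ((-1) ^ (k - i) * of_nat (k choose i) :: 'k)" for i
    have "(\<lambda>j. \<Sum>i\<le>k. c i * (a (N - int j) * x_minus_one_pow (N - int j) (of_nat i))) sums
            (\<Sum>i\<le>k. c i * \<psi> (of_nat i))"
      by (intro sums_sum_k sums_cmult_k rep_sums[OF rep]) simp
    moreover have "(\<Sum>i\<le>k. c i * \<psi> (of_nat i)) = (nabla ^^ k) \<psi> 0"
      unfolding nabla_pow_formula c_def by simp
    moreover have "(\<Sum>i\<le>k. c i * (a (N - int j) * x_minus_one_pow (N - int j) (of_nat i))) =
                   a (N - int j) * (nabla ^^ k) (x_minus_one_pow (N - int j)) 0" for j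
      unfolding nabla_pow_formula c_def by (simp add: sum_distrib_left mult_ac)
    ultimately have s: "(\<lambda>j. a (N - int j) * (nabla ^^ k) (x_minus_one_pow (N - int j)) 0) sums (nabla ^^ k) \<psi> 0"
      by simp
    have "nrm (a (N - int j) * (nabla ^^ k) (x_minus_one_pow (N - int j)) (0::'k)) \<le> nrm (fact k :: 'k) * \<alpha>" for j
    proof -
      have "nrm (a (N - int j) * (nabla ^^ k) (x_minus_one_pow (N - int j)) (0::'k)) \<le> \<alpha> * nrm (fact k :: 'k)"
        unfolding nrm_mult using \<alpha> xmo_coeff_bound[of k "N - int j"]
        by (intro mult_mono) auto
      then show ?thesis by (simp add: mult_ac)
    qed
    moreover have "nrm (fact k :: 'k) * \<alpha> \<ge> 0" using \<alpha> by simp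
    ultimately have "nrm (suminf (\<lambda>j. a (N - int j) * (nabla ^^ k) (x_minus_one_pow (N - int j)) 0)) \<le> nrm (fact k :: 'k) * \<alpha>"
      using sums_summable[OF s] by (intro nrm_suminf_le) auto
    then show ?thesis using sums_unique[OF s] by simp
  qed
  show ?thesis by (rule tendsto0_bound[OF bnd fact_bound_tendsto])
qed

lemma Dop_coeff:
  assumes rep: "A_rep N a \<psi>"
  shows "(nabla ^^ k) (Dop \<psi>) (0::'k) = (nabla ^^ Suc k) \<psi> 0"
proof -
  have "(nabla ^^ k) (Gf N a) (of_nat 0) = (nabla ^^ k) (nabla \<psi>) (of_nat 0)"
    by (rule nabla_pow_local_nat) (simp add: G_nat[OF rep] nabla_def)
  then show ?thesis unfolding Dop_eq[OF rep] nabla_Suc_right by simp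
qed

lemma part_iii:
  assumes \<psi>: "\<psi> \<in> (A_set :: ('k \<Rightarrow> 'k) set)" and \<phi>: "continuous_on Zp (\<phi> :: 'k \<Rightarrow> 'k)" and x: "x \<in> Zp"
  shows "conv \<psi> (sigma \<phi>) x = conv \<psi> \<phi> (x + 1) - conv (Dop \<psi>) \<phi> x"
proof -
  obtain N a where rep: "A_rep N a \<psi>" using \<psi> unfolding A_set_def by blast
  define A where "A k = (nabla ^^ k) \<psi> 0" for k
  define B where "B k = (nabla ^^ k) \<phi> 0" for k
  have At: "(\<lambda>k. nrm (A k)) \<longlonglongrightarrow> 0" unfolding A_def by (rule A_coeff_tendsto[OF rep])
  have Bt: "(\<lambda>k. nrm (B k)) \<longlonglongrightarrow> 0" unfolding B_def by (rule mahler[OF \<phi>])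
  have "conv \<psi> (sigma \<phi>) x = convc A (\<lambda>k. B k + B (Suc k)) x"
    unfolding conv_convc A_def B_def nabla_pow_sigma0 ..
  also have "\<dots> = convc A B (x + 1) - convc (\<lambda>k. A (Suc k)) B x"
    by (rule conv_shift[OF At Bt x])
  also have "(\<lambda>k. A (Suc k)) = (\<lambda>k. (nabla ^^ k) (Dop \<psi>) 0)"
    unfolding A_def using Dop_coeff[OF rep] by simp
  finally show ?thesis unfolding conv_convc A_def B_def .
qed

end



theorem proposition6p10:
  fixes p :: nat
  assumes "Cp_field p TYPE('k::{field_char_0,complete_space})"
  shows
    "(\<forall>y \<in> (Zp :: 'k set). \<forall>\<phi>. continuous_on Zp \<phi> \<longrightarrow>
        (\<forall>x \<in> Zp. Sop y (sigma \<phi>) x = sigma (Sop y \<phi>) x + y * Sop (y - 1) \<phi> x))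
   \<and> (\<forall>\<phi>. continuous_on (Zp :: 'k set) \<phi> \<longrightarrow> (\<forall>x \<in> Zp. \<forall>y \<in> Zp.
        Top x (sigma \<phi>) y = Top (x + 1) \<phi> y + y * Top x \<phi> (y - 1) \<and>
        conv (one_minus_x_pow y) (sigma \<phi>) x =
          conv (one_minus_x_pow y) \<phi> (x + 1) + y * conv (one_minus_x_pow (y - 1)) \<phi> x))
   \<and> (\<forall>\<psi> \<in> (A_set :: ('k \<Rightarrow> 'k) set). \<forall>\<phi>. continuous_on Zp \<phi> \<longrightarrow> (\<forall>x \<in> Zp.
        conv \<psi> (sigma \<phi>) x = conv \<psi> \<phi> (x + 1) - conv (Dop \<psi>) \<phi> x))"
proof -
  interpret cpf p "TYPE('k)" by unfold_locales (rule assms)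
  have i: "Sop y (sigma \<phi>) x = sigma (Sop y \<phi>) x + y * Sop (y - 1) \<phi> x"
    if "y \<in> Zp" "continuous_on Zp \<phi>" "x \<in> Zp" for y x :: 'k and \<phi>
    by (rule part_i[OF that])
  have ii1: "Top x (sigma \<phi>) y = Top (x + 1) \<phi> y + y * Top x \<phi> (y - 1)"
    if "y \<in> Zp" "continuous_on Zp \<phi>" "x \<in> Zp" for y x :: 'k and \<phi>
    using part_i[OF that] unfolding Top_def sigma_def .
  have ii2: "conv (one_minus_x_pow y) (sigma \<phi>) x =
          conv (one_minus_x_pow y) \<phi> (x + 1) + y * conv (one_minus_x_pow (y - 1)) \<phi> x"
    if "y \<in> Zp" "continuous_on Zp \<phi>" "x \<in> Zp" for y x :: 'k and \<phi>
    by (rule part_ii_conv[OF that])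
  have iii: "conv \<psi> (sigma \<phi>) x = conv \<psi> \<phi> (x + 1) - conv (Dop \<psi>) \<phi> x"
    if "\<psi> \<in> A_set" "continuous_on Zp \<phi>" "x \<in> Zp" for x :: 'k and \<phi> \<psi>
    by (rule part_iii[OF that])
  show ?thesis
  proof (intro conjI)
    show "\<forall>y \<in> (Zp :: 'k set). \<forall>\<phi>. continuous_on Zp \<phi> \<longrightarrow>
        (\<forall>x \<in> Zp. Sop y (sigma \<phi>) x = sigma (Sop y \<phi>) x + y * Sop (y - 1) \<phi> x)"
      using i by blast
    show "\<forall>\<phi>. continuous_on (Zp :: 'k set) \<phi> \<longrightarrow> (\<forall>x \<in> Zp. \<forall>y \<in> Zp.
        Top x (sigma \<phi>) y = Top (x + 1) \<phi> y + y * Top x \<phi> (y - 1) \<and>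
        conv (one_minus_x_pow y) (sigma \<phi>) x =
          conv (one_minus_x_pow y) \<phi> (x + 1) + y * conv (one_minus_x_pow (y - 1)) \<phi> x)"
      using ii1 ii2 by blast
    show "\<forall>\<psi> \<in> (A_set :: ('k \<Rightarrow> 'k) set). \<forall>\<phi>. continuous_on Zp \<phi> \<longrightarrow> (\<forall>x \<in> Zp.
        conv \<psi> (sigma \<phi>) x = conv \<psi> \<phi> (x + 1) - conv (Dop \<psi>) \<phi> x)"
      using iii by blast
  qed
qed


end
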